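(* Write $\dfrac{(q^2;q^2)_\infty}{(q^5;q^5)_\infty}=\sum_{n\ge0}a_nq^n$. Then for all $n\ge 0$: $a_n>0$ if $n\equiv 0\pmod 5$; $a_n<0$ if $n\equiv 2,4\pmod 5$; and $a_n=0$ if $n\equiv 1,3\pmod 5$.
   Context: For $|q|<1$, $(a;q)_\infty=\prod_{k\ge0}(1-aq^k)$. *)

theory Defs
  imports "HOL-Analysis.Analysis"
begin

definition qpoch_inf :: "real \<Rightarrow> real \<Rightarrow> real" where
  "qpoch_inf a q = (\<Prod>k. (1 - a * q ^ k))"

end

theory Submission
  imports Defs
begin


definition Lg :: "real \<Rightarrow> real" where "Lg y = - ln (1 - y)"

lemma Lg_nonneg: "0 \<le> y \<Longrightarrow> y < 1 \<Longrightarrow> 0 \<le> Lg y"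
  unfolding Lg_def by simp

lemma Lg_le: assumes "0 \<le> y" "y < 1" shows "Lg y \<le> y / (1 - y)"
proof -
  have "ln (1/(1-y)) \<le> 1/(1-y) - 1" by (rule ln_le_minus_one) (use assms in simp)
  then show ?thesis using assms by (simp add: Lg_def ln_div field_simps)
qed

lemma exp_Lg: "y < 1 \<Longrightarrow> exp (- Lg y) = 1 - y"
  unfolding Lg_def by simp

lemma summable_Lg_geom:
  assumes "0 \<le> a" "a < 1" "0 \<le> q" "q < 1"
  shows "summable (\<lambda>i. Lg (a * q^i))"
proof (rule summable_comparison_test')
  show "summable (\<lambda>i. (a/(1-a)) * q^i)"
    using assms by (intro summable_mult summable_geometric) simp
  fix i :: nat
  have q1: "q^i \<le> 1" "0 \<le> q^i" using assms by (simp_all add: power_le_one)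
  have aq0: "0 \<le> a * q^i" using assms q1 by simp
  have aq1: "a * q^i \<le> a" using assms q1 mult_left_le by blast
  have "Lg (a*q^i) \<le> a*q^i/(1 - a*q^i)" using aq0 aq1 assms by (intro Lg_le) auto
  also have "\<dots> \<le> a*q^i/(1-a)"
    using aq0 aq1 assms by (intro divide_left_mono) auto
  finally have "Lg (a*q^i) \<le> (a/(1-a)) * q^i" by simp
  moreover have "0 \<le> Lg (a*q^i)" using aq0 aq1 assms by (intro Lg_nonneg) auto
  ultimately show "norm (Lg (a*q^i)) \<le> (a/(1-a)) * q^i" by simp
qed

definition Pinf :: "real \<Rightarrow> real \<Rightarrow> real" where
  "Pinf a q = exp (- (\<Sum>i. Lg (a * q^i)))"

lemma Pinf_pos: "0 < Pinf a q" unfolding Pinf_def by simp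

lemma prod_fin_exp:
  assumes "\<And>i. i < n \<Longrightarrow> a * q^i < 1"
  shows "(\<Prod>i<n. 1 - a*q^i) = exp (- (\<Sum>i<n. Lg (a*q^i)))"
proof -
  have "exp (- (\<Sum>i<n. Lg (a*q^i))) = exp (\<Sum>i<n. - Lg (a*q^i))"
    by (simp add: sum_negf)
  also have "\<dots> = (\<Prod>i<n. exp (- Lg (a*q^i)))" by (rule exp_sum) (rule finite_lessThan)
  also have "\<dots> = (\<Prod>i<n. 1 - a*q^i)" using assms by (intro prod.cong) (auto simp: exp_Lg)
  finally show ?thesis by simp
qed

lemma aq_lt1: "0 \<le> (a::real) \<Longrightarrow> a < 1 \<Longrightarrow> 0 \<le> q \<Longrightarrow> q \<le> 1 \<Longrightarrow> a * q^i < 1"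
proof -
  assume h: "0 \<le> a" "a < 1" "0 \<le> q" "q \<le> 1"
  have "q^i \<le> 1" using h by (intro power_le_one) auto
  then have "a * q^i \<le> a" using h(1) by (rule mult_left_le)
  then show ?thesis using h(2) by linarith
qed

lemma Pinf_lim:
  assumes "0 \<le> a" "a < 1" "0 \<le> q" "q < 1"
  shows "(\<lambda>n. \<Prod>i<n. 1 - a*q^i) \<longlonglongrightarrow> Pinf a q"
proof -
  have "(\<lambda>n. exp (- (\<Sum>i<n. Lg (a*q^i)))) \<longlonglongrightarrow> Pinf a q"
    unfolding Pinf_def
    by (intro tendsto_exp tendsto_minus summable_LIMSEQ summable_Lg_geom assms)
  moreover have "(\<Prod>i<n. 1 - a*q^i) = exp (- (\<Sum>i<n. Lg (a*q^i)))" for n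
    using assms by (intro prod_fin_exp aq_lt1) auto
  ultimately show ?thesis by simp
qed

lemma qpoch_Pinf:
  assumes "0 \<le> a" "a < 1" "0 \<le> q" "q < 1"
  shows "qpoch_inf a q = Pinf a q"
proof -
  have "(\<lambda>n. \<Prod>i<Suc n. 1 - a*q^i) \<longlonglongrightarrow> Pinf a q"
    using Pinf_lim[OF assms] by (rule LIMSEQ_Suc)
  then have "(\<lambda>n. \<Prod>i\<le>n. 1 - a*q^(i+0)) \<longlonglongrightarrow> Pinf a q"
    by (simp add: lessThan_Suc_atMost)
  then have "(\<lambda>k. 1 - a*q^k) has_prod Pinf a q"
    unfolding has_prod_def raw_has_prod_def using Pinf_pos[of a q] by auto
  then show ?thesis unfolding qpoch_inf_def by (rule has_prod_unique[symmetric])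
qed


definition tri :: "nat \<Rightarrow> nat" where "tri k = k * (k - 1) div 2"

lemma tri_twice: "2 * tri k = k * (k - 1)"
proof -
  have "even (k * (k - 1))" by (cases k) auto
  then show ?thesis unfolding tri_def by simp
qed

lemma tri_0[simp]: "tri 0 = 0" by (simp add: tri_def)

lemma tri_1[simp]: "tri (Suc 0) = 0" by (simp add: tri_def)

lemma tri_Suc: "tri (Suc k) = tri k + k"
proof -
  have "2 * tri (Suc k) = 2 * (tri k + k)"
    unfolding distrib_left tri_twice by (cases k) (auto simp: algebra_simps)
  then show ?thesis by simp
qed

lemma tri_int: "2 * int (tri k) = int k * (int k - 1)"
proof -
  have "int (2 * tri k) = int (k * (k - 1))" by (simp only: tri_twice)
  then show ?thesis by (cases k) (auto simp: algebra_simps)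
qed

lemma even_int_tri: "2 * ((m::int) * (m - 1) div 2) = m * (m - 1)"
proof -
  have "even (m * (m - 1))" by auto
  then show ?thesis by simp
qed

definition qp :: "real \<Rightarrow> nat \<Rightarrow> real" where "qp q n = (\<Prod>i<n. 1 - q^Suc i)"

lemma qp_0[simp]: "qp q 0 = 1" by (simp add: qp_def)
lemma qp_Suc: "qp q (Suc n) = qp q n * (1 - q^Suc n)" by (simp add: qp_def)

lemma qp_pos: assumes "0 \<le> q" "q < 1" shows "0 < qp q n"
  unfolding qp_def
proof (intro prod_pos)
  fix i assume "i \<in> {..<n}"
  have "q^Suc i < 1" using aq_lt1[of q q i] assms by simp
  then show "0 < 1 - q^Suc i" by simp
qed

fun qbin :: "real \<Rightarrow> nat \<Rightarrow> nat \<Rightarrow> real" where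
  "qbin q n 0 = 1"
| "qbin q 0 (Suc k) = 0"
| "qbin q (Suc n) (Suc k) = qbin q n (Suc k) + q^(n-k) * qbin q n k"

lemma qbin_gt: "n < k \<Longrightarrow> qbin q n k = 0"
  by (induction q n k rule: qbin.induct) auto

lemma qbin_prod:
  assumes "k \<le> n"
  shows "qbin q n k * qp q k * qp q (n-k) = qp q n"
  using assms
proof (induction n arbitrary: k)
  case 0 then show ?case by simp
next
  case (Suc n)
  show ?case
  proof (cases k)
    case 0 then show ?thesis by simp
  next
    case (Suc j)
    note kj = this
    with "Suc.prems" have j: "j \<le> n" by simp
    have A: "qbin q n (Suc j) * qp q (Suc j) * qp q (n - j) = qp q n * (1 - q^(n-j))"
    proof (cases "j = n")
      case True then show ?thesis by (simp add: qbin_gt)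
    next
      case False
      then have jn: "Suc j \<le> n" using j by simp
      from "Suc.IH"[OF jn] have h: "qbin q n (Suc j) * qp q (Suc j) * qp q (n - Suc j) = qp q n" .
      have "n - j = Suc (n - Suc j)" using jn by simp
      then have e: "qp q (n - j) = qp q (n - Suc j) * (1 - q^(n-j))"
        by (simp only: qp_Suc)
      have "qbin q n (Suc j) * qp q (Suc j) * qp q (n - j)
          = (qbin q n (Suc j) * qp q (Suc j) * qp q (n - Suc j)) * (1 - q^(n-j))"
        by (simp only: e mult.assoc)
      then show ?thesis using h by simp
    qed
    have "q^(n-j) * qbin q n j * qp q (Suc j) * qp q (n-j)
        = q^(n-j) * (qbin q n j * qp q j * qp q (n-j)) * (1 - q^Suc j)"
      by (simp add: qp_Suc algebra_simps)
    then have B: "q^(n-j) * qbin q n j * qp q (Suc j) * qp q (n-j) = q^(n-j) * qp q n * (1 - q^Suc j)"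
      using "Suc.IH"[OF j] by simp
    have "qbin q (Suc n) k * qp q k * qp q (Suc n - k)
        = qbin q n (Suc j) * qp q (Suc j) * qp q (n - j) + q^(n-j) * qbin q n j * qp q (Suc j) * qp q (n-j)"
      using kj by (simp add: algebra_simps)
    also have "\<dots> = qp q n * (1 - q^(n-j)) + q^(n-j) * qp q n * (1 - q^Suc j)" using A B by simp
    also have "\<dots> = qp q n * (1 - q^(n-j) * q^Suc j)" by (simp add: algebra_simps)
    also have "q^(n-j) * q^Suc j = q^Suc n" using j by (simp flip: power_add)
    finally show ?thesis by (simp add: qp_Suc)
  qed
qed

lemma rothe: "(\<Prod>i<n. 1 - z*q^i) = (\<Sum>k\<le>n. (-1)^k * qbin q n k * q^tri k * z^k)"
proof (induction n)
  case 0 show ?case by simp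
next
  case (Suc n)
  define c where "c = (\<lambda>n k. (-1)^k * qbin q n k * q^tri k * z^k)"
  have S: "(\<Sum>k\<le>n. c n k) = (\<Prod>i<n. 1 - z*q^i)" using Suc by (simp add: c_def)
  have "(\<Sum>k\<le>Suc n. c (Suc n) k) = c (Suc n) 0 + (\<Sum>k\<le>n. c (Suc n) (Suc k))"
    by (rule sum.atMost_Suc_shift)
  also have "(\<Sum>k\<le>n. c (Suc n) (Suc k)) = (\<Sum>k\<le>n. c n (Suc k)) + (\<Sum>k\<le>n. - z * q^n * c n k)"
  proof -
    have "c (Suc n) (Suc k) = c n (Suc k) + - z * q^n * c n k" if "k \<le> n" for k
    proof -
      have "q^(n-k) * q^tri (Suc k) = q^n * q^tri k"
        using that by (simp add: tri_Suc flip: power_add)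
      then show ?thesis
        unfolding c_def by (simp add: algebra_simps)
    qed
    then show ?thesis by (simp add: sum_subtractf sum_negf)
  qed
  also have "c (Suc n) 0 + ((\<Sum>k\<le>n. c n (Suc k)) + (\<Sum>k\<le>n. - z * q^n * c n k))
      = (c n 0 + (\<Sum>k\<le>n. c n (Suc k))) + (\<Sum>k\<le>n. - z * q^n * c n k)"
    by (simp add: c_def)
  also have "c n 0 + (\<Sum>k\<le>n. c n (Suc k)) = (\<Sum>k\<le>Suc n. c n k)"
    by (rule sum.atMost_Suc_shift[symmetric])
  also have "\<dots> = (\<Sum>k\<le>n. c n k)" by (simp add: c_def qbin_gt)
  also have "(\<Sum>k\<le>n. - z * q^n * c n k) = - z * q^n * (\<Sum>k\<le>n. c n k)"
    by (simp add: sum_distrib_left)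
  finally show ?case unfolding S by (simp add: c_def algebra_simps)
qed


lemma prod_lessThan_add: "(\<Prod>i<(n::nat)+m. f i) = (\<Prod>i<n. f i) * (\<Prod>i<m. f (n+i))"
  by (induction m) (auto simp: algebra_simps)

lemma prod_negz: "(\<Prod>i<n. - z / q^Suc i) = (-z)^n / (q::real)^tri (Suc n)"
proof (induction n)
  case 0 show ?case by simp
next
  case (Suc n)
  have "(\<Prod>i<Suc n. - z / q^Suc i) = (-z)^n / q^tri (Suc n) * (- z / q^Suc n)"
    using Suc by simp
  also have "\<dots> = (-z)^Suc n / (q^tri (Suc n) * q^Suc n)" by simp
  also have "q^tri (Suc n) * q^Suc n = q^tri (Suc (Suc n))"
    by (simp only: tri_Suc[of "Suc n"] power_add)
  finally show ?case .
qed

lemma exp_identity: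
  "int (tri j) + int (tri (Suc n)) - int n * int j = (int j - int n) * (int j - int n - 1) div 2"
proof -
  have a: "2 * int (tri j) = int j * (int j - 1)" by (rule tri_int)
  have b: "2 * int (tri (Suc n)) = int (Suc n) * (int (Suc n) - 1)" by (rule tri_int)
  have c: "2 * ((int j - int n) * (int j - int n - 1) div 2) = (int j - int n) * (int j - int n - 1)"
    by (rule even_int_tri)
  have "2 * (int (tri j) + int (tri (Suc n)) - int n * int j) = 2 * ((int j - int n) * (int j - int n - 1) div 2)"
    unfolding c using a b by (simp add: algebra_simps)
  then show ?thesis by simp
qed

lemma fjtp_term:
  assumes q: "(q::real) \<noteq> 0" and z: "z \<noteq> 0"
  shows "(-1)^j * q^tri j * (z/q^n)^j / ((-z)^n / q^tri (Suc n))
    = (-1) powi (int j - int n) * q powi ((int j - int n) * (int j - int n - 1) div 2) * z powi (int j - int n)"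
proof -
  have h: "q^(n*j) = q powi (int n * int j)" by (metis of_nat_mult power_int_of_nat)
  have "(-1)^j * q^tri j * (z/q^n)^j / ((-z)^n / q^tri (Suc n))
      = ((-1)^j / (-1)^n) * ((q^tri j * q^tri (Suc n)) / q^(n*j)) * (z^j / z^n)"
    using q z by (simp add: power_divide power_mult field_simps power_minus[of z] flip: power_mult
        add: mult.commute)
  also have "(-1)^j / (-1)^n = (-1::real) powi (int j - int n)"
    by (simp add: power_int_diff)
  also have "z^j / z^n = z powi (int j - int n)"
    using z by (simp add: power_int_diff)
  also have "(q^tri j * q^tri (Suc n)) / q^(n*j) = q powi (int (tri j) + int (tri (Suc n)) - int n * int j)"
    using q by (simp add: power_int_diff power_int_add h flip: power_add)
  also note exp_identity
  finally show ?thesis by simp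
qed

lemma fjtp:
  assumes q: "0 < q" "q < 1" and z: "z \<noteq> 0"
  shows "(\<Prod>i<n. 1 - z*q^i) * (\<Prod>i<n. 1 - (q/z)*q^i) =
     (\<Sum>j\<le>2*n. qbin q (2*n) j * ((-1) powi (int j - int n) *
        q powi ((int j - int n) * (int j - int n - 1) div 2) * z powi (int j - int n)))"
proof -
  define w where "w = z / q^n"
  define C where "C = (-z)^n / q^tri (Suc n)"
  have C0: "C \<noteq> 0" using q z by (simp add: C_def)
  have R: "(\<Prod>i<2*n. 1 - w*q^i) = (\<Sum>j\<le>2*n. (-1)^j * qbin q (2*n) j * q^tri j * w^j)"
    by (rule rothe)
  have s1: "(\<Prod>i<2*n. 1 - w*q^i) = (\<Prod>i<n. 1 - w*q^i) * (\<Prod>i<n. 1 - w*q^(n+i))"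
    using prod_lessThan_add[of "\<lambda>i. 1 - w*q^i" n n] by (simp add: mult_2)
  have s2: "(\<Prod>i<n. 1 - w*q^(n+i)) = (\<Prod>i<n. 1 - z*q^i)"
    using q by (intro prod.cong) (auto simp: w_def power_add)
  have "(\<Prod>i<n. 1 - w*q^i) = (\<Prod>i<n. 1 - w*q^(n - Suc i))"
    by (rule prod.nat_diff_reindex[symmetric])
  also have "\<dots> = (\<Prod>i<n. (- z / q^Suc i) * (1 - (q/z)*q^i))"
  proof (intro prod.cong refl)
    fix i assume "i \<in> {..<n}"
    then have e: "n - Suc i + Suc i = n" by simp
    have "q^n = q^(n - Suc i) * q^Suc i"
      using power_add[of q "n - Suc i" "Suc i"] by (simp only: e)
    then have "w*q^(n - Suc i) = z / q^Suc i" using q by (simp add: w_def field_simps)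
    then show "1 - w*q^(n - Suc i) = (- z / q^Suc i) * (1 - (q/z)*q^i)"
      using q z by (simp add: field_simps)
  qed
  also have "\<dots> = C * (\<Prod>i<n. 1 - (q/z)*q^i)"
    by (simp only: prod.distrib prod_negz C_def)
  finally have s3: "(\<Prod>i<n. 1 - w*q^i) = C * (\<Prod>i<n. 1 - (q/z)*q^i)" .
  have "C * ((\<Prod>i<n. 1 - z*q^i) * (\<Prod>i<n. 1 - (q/z)*q^i))
       = (\<Sum>j\<le>2*n. (-1)^j * qbin q (2*n) j * q^tri j * w^j)"
    using R s1 s2 s3 by (simp add: algebra_simps)
  then have "(\<Prod>i<n. 1 - z*q^i) * (\<Prod>i<n. 1 - (q/z)*q^i)
       = (\<Sum>j\<le>2*n. (-1)^j * qbin q (2*n) j * q^tri j * w^j) / C"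
    using C0 by (simp add: field_simps)
  also have "\<dots> = (\<Sum>j\<le>2*n. qbin q (2*n) j * ((-1)^j * q^tri j * w^j / C))"
    by (simp add: sum_divide_distrib algebra_simps)
  also have "\<dots> = (\<Sum>j\<le>2*n. qbin q (2*n) j * ((-1) powi (int j - int n) *
        q powi ((int j - int n) * (int j - int n - 1) div 2) * z powi (int j - int n)))"
  proof -
    have qne: "q \<noteq> 0" using q by simp
    show ?thesis by (simp only: w_def C_def fjtp_term[OF qne z])
  qed
  finally show ?thesis .
qed


definition jt :: "real \<Rightarrow> real \<Rightarrow> int \<Rightarrow> real" where
  "jt q z k = (-1) powi k * q powi (k*(k-1) div 2) * z powi k"

lemma qp_eq: "qp q m = (\<Prod>i<m. 1 - q*q^i)" unfolding qp_def by simp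

lemma qp_lim: "0 \<le> q \<Longrightarrow> q < 1 \<Longrightarrow> qp q \<longlonglongrightarrow> Pinf q q"
  using Pinf_lim[of q q] by (simp add: qp_eq[abs_def])

lemma qp_ge: assumes "0 \<le> q" "q < 1" shows "Pinf q q \<le> qp q m"
proof -
  have "qp q m = exp (- (\<Sum>i<m. Lg (q*q^i)))"
    unfolding qp_eq using assms by (intro prod_fin_exp aq_lt1) auto
  moreover have "(\<Sum>i<m. Lg (q*q^i)) \<le> (\<Sum>i. Lg (q*q^i))"
    using assms by (intro sum_le_suminf summable_Lg_geom Lg_nonneg aq_lt1) auto
  ultimately show ?thesis by (simp add: Pinf_def)
qed

lemma qp_le1: assumes "0 \<le> q" "q < 1" shows "qp q m \<le> 1"
  unfolding qp_def
proof (rule prod_le_1)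
  fix i assume "i \<in> {..<m}"
  have "q^Suc i \<le> 1" using assms by (intro power_le_one) auto
  moreover have "0 \<le> q^Suc i" using assms by simp
  ultimately show "0 \<le> 1 - q^Suc i \<and> 1 - q^Suc i \<le> 1" by simp
qed

lemma qbin_eq: assumes "0 \<le> q" "q < 1" "k \<le> n"
  shows "qbin q n k = qp q n / (qp q k * qp q (n-k))"
proof -
  have h: "qbin q n k * (qp q k * qp q (n-k)) = qp q n"
    using qbin_prod[OF assms(3), of q] by (simp add: mult.assoc)
  have nz: "qp q k * qp q (n-k) \<noteq> 0" using qp_pos[OF assms(1,2)] by (metis mult_pos_pos less_irrefl)
  show ?thesis using h nz by (simp add: eq_divide_eq)
qed

lemma qbin_bound: assumes "0 \<le> q" "q < 1"
  shows "0 \<le> qbin q n k \<and> qbin q n k \<le> 1 / (Pinf q q * Pinf q q)"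
proof (cases "k \<le> n")
  case True
  define P where "P = Pinf q q"
  have P: "0 < P" by (simp add: P_def Pinf_pos)
  have a: "P \<le> qp q k" "P \<le> qp q (n-k)" using qp_ge assms by (auto simp: P_def)
  have b: "qp q n \<le> 1" "0 < qp q n" using qp_le1 qp_pos assms by auto
  have "qbin q n k = qp q n / (qp q k * qp q (n-k))" using qbin_eq assms True by simp
  also have "\<dots> \<le> 1 / (qp q k * qp q (n-k))"
    using b a P by (intro divide_right_mono) auto
  also have "\<dots> \<le> 1 / (P * P)"
    using a P by (intro divide_left_mono mult_mono) auto
  finally show ?thesis using a b P \<open>qbin q n k = _\<close> by (simp add: P_def)
next
  case False
  then show ?thesis by (simp add: qbin_gt Pinf_pos)
qed

lemma qp_lim2: "0 \<le> q \<Longrightarrow> q < 1 \<Longrightarrow> (\<lambda>n. qp q (2*n)) \<longlonglongrightarrow> Pinf q q"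
proof -
  assume "0 \<le> q" "q < 1"
  then have "(qp q \<circ> (\<lambda>n. 2*n)) \<longlonglongrightarrow> Pinf q q"
    by (intro LIMSEQ_subseq_LIMSEQ qp_lim) (auto simp: strict_mono_def)
  then show ?thesis by (simp add: comp_def)
qed

lemma qp_lim_minus: "0 \<le> q \<Longrightarrow> q < 1 \<Longrightarrow> (\<lambda>n. qp q (n - c)) \<longlonglongrightarrow> Pinf q q"
  by (rule filterlim_compose[OF qp_lim filterlim_minus_const_nat_at_top])

lemma qp_lim_plus: "0 \<le> q \<Longrightarrow> q < 1 \<Longrightarrow> (\<lambda>n. qp q (n + c)) \<longlonglongrightarrow> Pinf q q"
  by (rule LIMSEQ_ignore_initial_segment[OF qp_lim])

lemma qbin_lim_pos: assumes "0 \<le> q" "q < 1"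
  shows "(\<lambda>n. qbin q (2*n) (n+k)) \<longlonglongrightarrow> 1 / Pinf q q"
proof -
  define P where "P = Pinf q q"
  have P: "0 < P" by (simp add: P_def Pinf_pos)
  have "(\<lambda>n. qp q (2*n) / (qp q (n+k) * qp q (n-k))) \<longlonglongrightarrow> P / (P * P)"
    using P assms unfolding P_def
    by (intro tendsto_divide tendsto_mult qp_lim2 qp_lim_plus qp_lim_minus) auto
  moreover have "eventually (\<lambda>n. qp q (2*n) / (qp q (n+k) * qp q (n-k)) = qbin q (2*n) (n+k)) sequentially"
    using eventually_ge_at_top[of k]
  proof eventually_elim
    case (elim n)
    then have "n + k \<le> 2*n" "2*n - (n+k) = n - k" by auto
    then show ?case using qbin_eq[OF assms] by simp
  qed
  ultimately have "(\<lambda>n. qbin q (2*n) (n+k)) \<longlonglongrightarrow> P / (P * P)"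
    by (rule Lim_transform_eventually)
  then show ?thesis using P by (simp add: P_def)
qed

lemma qbin_lim_neg: assumes "0 \<le> q" "q < 1"
  shows "(\<lambda>n. if m < n then qbin q (2*n) (n - Suc m) else 0) \<longlonglongrightarrow> 1 / Pinf q q"
proof -
  define P where "P = Pinf q q"
  have P: "0 < P" by (simp add: P_def Pinf_pos)
  have "(\<lambda>n. qp q (2*n) / (qp q (n - Suc m) * qp q (n + Suc m))) \<longlonglongrightarrow> P / (P * P)"
    using P assms unfolding P_def
    by (intro tendsto_divide tendsto_mult qp_lim2 qp_lim_plus qp_lim_minus) auto
  moreover have "eventually (\<lambda>n. qp q (2*n) / (qp q (n - Suc m) * qp q (n + Suc m))
       = (if m < n then qbin q (2*n) (n - Suc m) else 0)) sequentially"
    using eventually_ge_at_top[of "Suc m"]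
  proof eventually_elim
    case (elim n)
    then have "n - Suc m \<le> 2*n" "2*n - (n - Suc m) = n + Suc m" "m < n" by auto
    then show ?case using qbin_eq[OF assms] by simp
  qed
  ultimately have "(\<lambda>n. if m < n then qbin q (2*n) (n - Suc m) else 0) \<longlonglongrightarrow> P / (P * P)"
    by (rule Lim_transform_eventually)
  then show ?thesis using P by (simp add: P_def)
qed

lemma tri_int_div: "int k * (int k - 1) div 2 = int (tri k)"
  using tri_int[of k] by linarith

lemma jt_pos: "jt q z (int k) = (-1)^k * q^tri k * z^k"
  unfolding jt_def tri_int_div by simp

lemma jt_neg: assumes "z \<noteq> 0"
  shows "jt q z (- int m - 1) = (-1)^(Suc m) * q^tri (Suc (Suc m)) / z^(Suc m)"
proof -
  have e1: "- int m - 1 = - int (Suc m)" by simp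
  have e2: "(- int (Suc m)) * (- int (Suc m) - 1) = int (Suc (Suc m)) * (int (Suc (Suc m)) - 1)"
    by (simp add: algebra_simps)
  have a: "(-1::real) powi (- int (Suc m)) = (-1)^(Suc m)"
    unfolding power_int_minus power_int_of_nat by (simp add: power_inverse[symmetric])
  have b: "z powi (- int (Suc m)) = 1 / z^(Suc m)"
    unfolding power_int_minus power_int_of_nat by (simp add: inverse_eq_divide)
  show ?thesis
    unfolding jt_def e1 e2 tri_int_div power_int_of_nat a b by simp
qed

lemma jt_pos_bound: assumes "0 < q" "q \<le> 1" "0 < z"
  shows "norm (jt q z (int k)) \<le> z^k"
proof -
  have "q^tri k \<le> 1" using assms by (intro power_le_one) auto
  then have "q^tri k * z^k \<le> 1 * z^k" using assms by (intro mult_right_mono) auto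
  then show ?thesis using assms by (simp add: jt_pos abs_mult power_abs)
qed

lemma jt_neg_bound: assumes "0 < q" "q \<le> 1" "0 < z"
  shows "norm (jt q z (- int m - 1)) \<le> (q/z)^(Suc m)"
proof -
  have "tri (Suc (Suc m)) = tri (Suc m) + Suc m" by (rule tri_Suc)
  then have "Suc m \<le> tri (Suc (Suc m))" by simp
  then have "q^tri (Suc (Suc m)) \<le> q^(Suc m)" using assms by (intro power_decreasing) auto
  then have "q^tri (Suc (Suc m)) / z^(Suc m) \<le> q^(Suc m) / z^(Suc m)"
    using assms by (intro divide_right_mono) auto
  then show ?thesis using assms by (simp add: jt_neg abs_mult power_abs power_divide)
qed


lemma sum_atMost_split: "(\<Sum>j\<le>(n::nat)+m. g j) = (\<Sum>j<n. g j) + (\<Sum>k\<le>m. g (n+k))"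
  by (induction m) (auto simp: lessThan_Suc_atMost[symmetric] add.assoc)

lemma fjtp_split:
  assumes q: "0 < q" "q < 1" and z: "z \<noteq> 0"
  shows "(\<Prod>i<n. 1 - z*q^i) * (\<Prod>i<n. 1 - (q/z)*q^i) =
     (\<Sum>k\<le>n. qbin q (2*n) (n+k) * jt q z (int k)) +
     (\<Sum>m<n. qbin q (2*n) (n - Suc m) * jt q z (- int m - 1))"
proof -
  define g where "g = (\<lambda>j. qbin q (2*n) j * jt q z (int j - int n))"
  have "(\<Prod>i<n. 1 - z*q^i) * (\<Prod>i<n. 1 - (q/z)*q^i) = (\<Sum>j\<le>n+n. g j)"
    using fjtp[OF q z, of n] by (simp add: g_def jt_def mult_2)
  also have "\<dots> = (\<Sum>j<n. g j) + (\<Sum>k\<le>n. g (n+k))" by (rule sum_atMost_split)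
  also have "(\<Sum>k\<le>n. g (n+k)) = (\<Sum>k\<le>n. qbin q (2*n) (n+k) * jt q z (int k))"
    by (simp add: g_def)
  also have "(\<Sum>j<n. g j) = (\<Sum>m<n. g (n - Suc m))" by (rule sum.nat_diff_reindex[symmetric])
  also have "\<dots> = (\<Sum>m<n. qbin q (2*n) (n - Suc m) * jt q z (- int m - 1))"
  proof (intro sum.cong refl)
    fix m assume "m \<in> {..<n}"
    then have e: "int (n - Suc m) - int n = - int m - 1" by auto
    show "g (n - Suc m) = qbin q (2*n) (n - Suc m) * jt q z (- int m - 1)"
      by (simp only: g_def e)
  qed
  finally show ?thesis by simp
qed

theorem jtp:
  assumes q: "0 < q" "q < z" and z1: "z < 1"
  shows "(jt q z has_sum (Pinf q q * Pinf z q * Pinf (q/z) q)) UNIV"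
proof -
  define P where "P = Pinf q q"
  have P: "0 < P" by (simp add: P_def Pinf_pos)
  have q1: "q < 1" and z0: "0 < z" and zne: "z \<noteq> 0" using q z1 by auto
  have qz: "0 \<le> q/z" "q/z < 1" using q z0 by (auto simp: field_simps)
  define fa where "fa = (\<lambda>k n. qbin q (2*n) (n+k) * jt q z (int k))"
  define fb where "fb = (\<lambda>m n. (if m < n then qbin q (2*n) (n - Suc m) else 0) * jt q z (- int m - 1))"
  have sa: "summable (\<lambda>k. norm (jt q z (int k)))"
    by (rule summable_comparison_test'[OF summable_geometric[of z]])
       (use jt_pos_bound[of q z] q z0 q1 z1 in auto)
  have sb: "summable (\<lambda>m. norm (jt q z (- int m - 1)))"
    by (rule summable_comparison_test'[OF summable_mult[OF summable_geometric[of "q/z"], of "q/z"]])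
       (use jt_neg_bound[of q z] q z0 q1 qz in auto)
  have Ta: "(\<lambda>n. suminf (\<lambda>k. fa k n)) \<longlonglongrightarrow> suminf (\<lambda>k. jt q z (int k) / P)"
  proof -
    have lim: "(\<lambda>n. fa k n) \<longlonglongrightarrow> jt q z (int k) / P" for k
    proof -
      have "(\<lambda>n. qbin q (2*n) (n+k) * jt q z (int k)) \<longlonglongrightarrow> 1 / P * jt q z (int k)"
        unfolding P_def using q q1 by (intro tendsto_mult qbin_lim_pos tendsto_const) auto
      then show ?thesis by (simp add: fa_def)
    qed
    have bd: "norm (fa k n) \<le> (1/(P*P)) * norm (jt q z (int k))" for k n
    proof -
      have "norm (fa k n) = qbin q (2*n) (n+k) * norm (jt q z (int k))"
        using qbin_bound[of q] q q1 by (simp add: fa_def abs_mult)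
      also have "\<dots> \<le> (1/(P*P)) * norm (jt q z (int k))"
        using qbin_bound[of q "2*n" "n+k"] q q1 by (intro mult_right_mono) (auto simp: P_def)
      finally show ?thesis .
    qed
    have "eventually (\<lambda>(k,n). norm (fa k n) \<le> (1/(P*P)) * norm (jt q z (int k))) (at_top \<times>\<^sub>F sequentially)"
      by (intro always_eventually) (use bd in \<open>simp add: case_prod_unfold\<close>)
    from tannerys_theorem[OF lim this summable_mult[OF sa]] show ?thesis by simp
  qed
  have Tb: "(\<lambda>n. suminf (\<lambda>m. fb m n)) \<longlonglongrightarrow> suminf (\<lambda>m. jt q z (- int m - 1) / P)"
  proof -
    have lim: "(\<lambda>n. fb m n) \<longlonglongrightarrow> jt q z (- int m - 1) / P" for m
    proof -
      have "(\<lambda>n. (if m < n then qbin q (2*n) (n - Suc m) else 0) * jt q z (- int m - 1))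
              \<longlonglongrightarrow> 1 / P * jt q z (- int m - 1)"
        unfolding P_def using q q1 by (intro tendsto_mult qbin_lim_neg tendsto_const) auto
      then show ?thesis by (simp add: fb_def)
    qed
    have bd: "norm (fb m n) \<le> (1/(P*P)) * norm (jt q z (- int m - 1))" for m n
    proof -
      have "norm (fb m n) = (if m < n then qbin q (2*n) (n - Suc m) else 0) * norm (jt q z (- int m - 1))"
        using qbin_bound[of q] q q1 by (simp add: fb_def abs_mult)
      also have "\<dots> \<le> (1/(P*P)) * norm (jt q z (- int m - 1))"
        using qbin_bound[of q "2*n" "n - Suc m"] q q1 P by (intro mult_right_mono) (auto simp: P_def)
      finally show ?thesis .
    qed
    have "eventually (\<lambda>(m,n). norm (fb m n) \<le> (1/(P*P)) * norm (jt q z (- int m - 1))) (at_top \<times>\<^sub>F sequentially)"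
      by (intro always_eventually) (use bd in \<open>simp add: case_prod_unfold\<close>)
    from tannerys_theorem[OF lim this summable_mult[OF sb]] show ?thesis by simp
  qed
  have fin: "(\<Prod>i<n. 1 - z*q^i) * (\<Prod>i<n. 1 - (q/z)*q^i) = suminf (\<lambda>k. fa k n) + suminf (\<lambda>m. fb m n)" for n
  proof -
    have "suminf (\<lambda>k. fa k n) = (\<Sum>k\<le>n. fa k n)"
      by (rule suminf_finite) (auto simp: fa_def qbin_gt)
    moreover have "suminf (\<lambda>m. fb m n) = (\<Sum>m<n. fb m n)"
      by (rule suminf_finite) (auto simp: fb_def)
    ultimately show ?thesis using fjtp_split[OF q(1) q1 zne, of n] by (simp add: fa_def fb_def)
  qed
  have L1: "(\<lambda>n. (\<Prod>i<n. 1 - z*q^i) * (\<Prod>i<n. 1 - (q/z)*q^i)) \<longlonglongrightarrow> Pinf z q * Pinf (q/z) q"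
    using q q1 z0 z1 qz by (intro tendsto_mult Pinf_lim) auto
  have L2: "(\<lambda>n. (\<Prod>i<n. 1 - z*q^i) * (\<Prod>i<n. 1 - (q/z)*q^i))
      \<longlonglongrightarrow> suminf (\<lambda>k. jt q z (int k) / P) + suminf (\<lambda>m. jt q z (- int m - 1) / P)"
    unfolding fin by (intro tendsto_add Ta Tb)
  have E: "Pinf z q * Pinf (q/z) q = suminf (\<lambda>k. jt q z (int k) / P) + suminf (\<lambda>m. jt q z (- int m - 1) / P)"
    using L1 L2 by (rule LIMSEQ_unique)
  have sa': "summable (\<lambda>k. jt q z (int k))" by (rule summable_norm_cancel[OF sa])
  have sb': "summable (\<lambda>m. jt q z (- int m - 1))" by (rule summable_norm_cancel[OF sb])
  define Sp where "Sp = suminf (\<lambda>k. jt q z (int k))"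
  define Sn where "Sn = suminf (\<lambda>m. jt q z (- int m - 1))"
  have E2: "Sp + Sn = P * (Pinf z q * Pinf (q/z) q)"
    unfolding E Sp_def Sn_def using P
    by (simp add: suminf_divide[OF sa'] suminf_divide[OF sb'] field_simps)
  have hp: "((\<lambda>k. jt q z (int k)) has_sum Sp) UNIV"
    unfolding Sp_def by (rule norm_summable_imp_has_sum[OF sa summable_sums[OF sa']])
  have hn: "((\<lambda>m. jt q z (- int m - 1)) has_sum Sn) UNIV"
    unfolding Sn_def by (rule norm_summable_imp_has_sum[OF sb summable_sums[OF sb']])
  have hp': "(jt q z has_sum Sp) (range int)"
    using hp by (subst has_sum_reindex) (auto simp: comp_def)
  have inj2: "inj (\<lambda>m::nat. - int m - 1)" by (auto simp: inj_def)
  have hn': "(jt q z has_sum Sn) (range (\<lambda>m::nat. - int m - 1))"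
    using hn by (subst has_sum_reindex[OF inj2]) (auto simp: comp_def)
  have U: "range int \<union> range (\<lambda>m::nat. - int m - 1) = UNIV"
  proof -
    have "k \<in> range int \<union> range (\<lambda>m::nat. - int m - 1)" for k :: int
    proof (cases "k \<ge> 0")
      case True then have "k = int (nat k)" by simp
      then show ?thesis by blast
    next
      case False then have "k = - int (nat (- k - 1)) - 1" by simp
      then show ?thesis by blast
    qed
    then show ?thesis by blast
  qed
  have D: "range int \<inter> range (\<lambda>m::nat. - int m - 1) = {}" by auto
  have "(jt q z has_sum (Sp + Sn)) UNIV"
    using has_sum_Un_disjoint[OF hp' hn' D] unfolding U .
  then show ?thesis unfolding E2 P_def by (simp add: mult.assoc)
qed


lemma int_has_sum_split:
  fixes h :: "int \<Rightarrow> real"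
  assumes sa: "summable (\<lambda>k. norm (h (int k)))" and sb: "summable (\<lambda>m. norm (h (- int m - 1)))"
  shows "(h has_sum (suminf (\<lambda>k. h (int k)) + suminf (\<lambda>m. h (- int m - 1)))) UNIV"
proof -
  have sa': "summable (\<lambda>k. h (int k))" by (rule summable_norm_cancel[OF sa])
  have sb': "summable (\<lambda>m. h (- int m - 1))" by (rule summable_norm_cancel[OF sb])
  have hp: "((\<lambda>k. h (int k)) has_sum suminf (\<lambda>k. h (int k))) UNIV"
    by (rule norm_summable_imp_has_sum[OF sa summable_sums[OF sa']])
  have hn: "((\<lambda>m. h (- int m - 1)) has_sum suminf (\<lambda>m. h (- int m - 1))) UNIV"
    by (rule norm_summable_imp_has_sum[OF sb summable_sums[OF sb']])
  have hp': "(h has_sum suminf (\<lambda>k. h (int k))) (range int)"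
    using hp by (subst has_sum_reindex) (auto simp: comp_def)
  have inj2: "inj (\<lambda>m::nat. - int m - 1)" by (auto simp: inj_def)
  have hn': "(h has_sum suminf (\<lambda>m. h (- int m - 1))) (range (\<lambda>m::nat. - int m - 1))"
    using hn by (subst has_sum_reindex[OF inj2]) (auto simp: comp_def)
  have U: "range int \<union> range (\<lambda>m::nat. - int m - 1) = UNIV"
  proof -
    have "k \<in> range int \<union> range (\<lambda>m::nat. - int m - 1)" for k :: int
    proof (cases "k \<ge> 0")
      case True then have "k = int (nat k)" by simp
      then show ?thesis by blast
    next
      case False then have "k = - int (nat (- k - 1)) - 1" by simp
      then show ?thesis by blast
    qed
    then show ?thesis by blast
  qed
  have D: "range int \<inter> range (\<lambda>m::nat. - int m - 1) = {}" by auto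
  show ?thesis
    using has_sum_Un_disjoint[OF hp' hn' D] unfolding U .
qed

lemma jt_abs_summable:
  assumes q: "0 < q" "q < z" and z1: "z < 1"
  shows "(\<lambda>k. norm (jt q z k)) summable_on UNIV"
proof -
  have q1: "q < 1" and z0: "0 < z" using q z1 by auto
  have qz: "0 \<le> q/z" "q/z < 1" using q z0 by (auto simp: field_simps)
  have sa: "summable (\<lambda>k. norm (norm (jt q z (int k))))"
    by (rule summable_comparison_test'[OF summable_geometric[of z]])
       (use jt_pos_bound[of q z] q z0 q1 z1 in auto)
  have sb: "summable (\<lambda>m. norm (norm (jt q z (- int m - 1))))"
    by (rule summable_comparison_test'[OF summable_mult[OF summable_geometric[of "q/z"], of "q/z"]])
       (use jt_neg_bound[of q z] q z0 q1 qz in auto)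
  show ?thesis using int_has_sum_split[OF sa sb] by (rule has_sum_imp_summable)
qed


definition tz :: "int \<Rightarrow> int" where "tz k = k * (k - 1) div 2"

lemma tz2: "2 * tz k = k * (k - 1)" unfolding tz_def by (rule even_int_tri)

definition thT :: "nat \<Rightarrow> nat \<Rightarrow> real \<Rightarrow> int \<Rightarrow> real" where
  "thT N j q m = (-1) powi m * q powi (int N * tz m + int j * m)"

lemma jt_thT: assumes "q \<noteq> 0" shows "jt (q^N) (q^j) m = thT N j q m"
proof -
  have "(q^N) powi (m * (m - 1) div 2) * (q^j) powi m = q powi (int N * tz m + int j * m)"
    using assms by (simp add: power_int_power power_int_add tz_def)
  then show ?thesis unfolding jt_def thT_def by (simp add: mult.assoc)
qed

definition TP :: "nat \<Rightarrow> nat \<Rightarrow> real \<Rightarrow> real" where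
  "TP N j q = Pinf (q^N) (q^N) * Pinf (q^j) (q^N) * Pinf (q^(N-j)) (q^N)"

lemma theta_hs:
  assumes q: "0 < q" "q < 1" and j: "0 < j" "j < N"
  shows "(thT N j q has_sum TP N j q) UNIV"
    and "thT N j q summable_on UNIV"
proof -
  have a: "q^N < q^j" using power_strict_decreasing[of j N q] q j by blast
  have b: "q^j < 1" using power_strict_decreasing[of 0 j q] q j by simp
  have c: "0 < q^N" using q by simp
  have d: "q^N / q^j = q^(N-j)" using power_diff[of q j N] q j by simp
  have e: "jt (q^N) (q^j) = thT N j q" using q by (intro ext jt_thT) auto
  show "(thT N j q has_sum TP N j q) UNIV"
    using jtp[OF c a b] unfolding e d TP_def .
  have "(\<lambda>k. norm (jt (q^N) (q^j) k)) summable_on UNIV" by (rule jt_abs_summable[OF c a b])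
  then show "thT N j q summable_on UNIV"
    unfolding e by (rule abs_summable_summable)
qed

lemma has_sum_times:
  fixes f g :: "'a \<Rightarrow> real"
  assumes hf: "(f has_sum F) UNIV" and hg: "(g has_sum G) UNIV"
  shows "((\<lambda>p. f (fst p) * g (snd p)) has_sum (F*G)) UNIV"
proof -
  have af: "(\<lambda>x. norm (f x)) summable_on UNIV"
    using hf has_sum_imp_summable summable_on_iff_abs_summable_on_real by blast
  have ag: "(\<lambda>x. norm (g x)) summable_on UNIV"
    using hg has_sum_imp_summable summable_on_iff_abs_summable_on_real by blast
  have "(\<lambda>p. norm (f (fst p) * g (snd p))) summable_on (UNIV \<times> UNIV)"
  proof (rule iffD2[OF Infinite_Sum.abs_summable_on_Sigma_iff], intro conjI ballI)
    fix x
    show "(\<lambda>y. norm (f (fst (x, y)) * g (snd (x, y)))) summable_on UNIV"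
      using summable_on_cmult_right[OF ag, of "norm (f x)"] by (simp add: abs_mult)
  next
    have "(\<lambda>x. norm (f x) * infsum (\<lambda>y. norm (g y)) UNIV) summable_on UNIV"
      by (rule summable_on_cmult_left[OF af])
    moreover have "0 \<le> infsum (\<lambda>y. norm (g y)) UNIV" by (rule infsum_nonneg) simp
    ultimately show "(\<lambda>x. norm (infsum (\<lambda>y. norm (f (fst (x, y)) * g (snd (x, y)))) UNIV)) summable_on UNIV"
      by (simp add: abs_mult infsum_cmult_right' summable_on_iff_abs_summable_on_real[symmetric])
  qed
  then have s: "(\<lambda>p. f (fst p) * g (snd p)) summable_on (UNIV \<times> UNIV)"
    by (rule abs_summable_summable)
  have "((\<lambda>p. f (fst p) * g (snd p)) has_sum (F*G)) (Sigma UNIV (\<lambda>_. UNIV))"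
  proof (rule has_sum_SigmaI[where g = "\<lambda>x. f x * G"])
    show "((\<lambda>y. f (fst (x, y)) * g (snd (x, y))) has_sum f x * G) UNIV" for x
      using has_sum_cmult_right[OF hg, of "f x"] by simp
    show "((\<lambda>x. f x * G) has_sum F * G) UNIV" by (rule has_sum_cmult_left[OF hf])
    show "(\<lambda>p. f (fst p) * g (snd p)) summable_on Sigma UNIV (\<lambda>_. UNIV)" using s by simp
  qed
  then show ?thesis by simp
qed

lemma has_sum_split2:
  fixes h :: "'a \<Rightarrow> real"
  assumes hs: "(h has_sum S) UNIV" and i1: "inj g1" and i2: "inj g2"
    and D: "range g1 \<inter> range g2 = {}" and U: "range g1 \<union> range g2 = UNIV"
  shows "((h \<circ> g1) has_sum infsum h (range g1)) UNIV"
    and "((h \<circ> g2) has_sum infsum h (range g2)) UNIV"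
    and "S = infsum h (range g1) + infsum h (range g2)"
proof -
  have sm: "h summable_on UNIV" using hs by (rule has_sum_imp_summable)
  have h1: "(h has_sum infsum h (range g1)) (range g1)"
    using summable_on_subset_banach[OF sm] by (intro has_sum_infsum) auto
  have h2: "(h has_sum infsum h (range g2)) (range g2)"
    using summable_on_subset_banach[OF sm] by (intro has_sum_infsum) auto
  show "((h \<circ> g1) has_sum infsum h (range g1)) UNIV" using h1 has_sum_reindex[OF i1] by blast
  show "((h \<circ> g2) has_sum infsum h (range g2)) UNIV" using h2 has_sum_reindex[OF i2] by blast
  have "(h has_sum (infsum h (range g1) + infsum h (range g2))) UNIV"
    using has_sum_Un_disjoint[OF h1 h2 D] unfolding U .
  then show "S = infsum h (range g1) + infsum h (range g2)" using hs has_sum_unique by blast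
qed

lemma has_sum_bij:
  fixes h :: "'a \<Rightarrow> real"
  assumes "bij s" "(h has_sum S) UNIV"
  shows "((h \<circ> s) has_sum S) UNIV"
  using assms has_sum_reindex[of s UNIV h S] by (simp add: bij_def)

lemma m1_powi: "(-1::real) powi k = (if even k then 1 else -1)"
proof (cases "k \<ge> 0")
  case True
  then have "(-1::real) powi k = (-1)^nat k" by (simp add: power_int_def)
  then show ?thesis using True by (simp add: even_nat_iff)
next
  case False
  then have "(-1::real) powi k = (-1)^nat (-k)" by (simp add: power_int_def)
  then show ?thesis using False by (simp add: even_nat_iff)
qed

lemma thT_mult: assumes "q \<noteq> 0"
  shows "thT N j q a * thT M i q b = (-1) powi (a + b) * q powi (int N * tz a + int j * a + int M * tz b + int i * b)"
  unfolding thT_def using assms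
  by (simp add: power_int_add algebra_simps)


lemma tz_add: "tz (a + b) = tz a + tz b + a * b"
proof -
  have h: "2 * tz (a + b) = (a+b)*(a+b-1)" "2 * tz a = a*(a-1)" "2 * tz b = b*(b-1)" by (rule tz2)+
  have "2 * tz (a + b) = 2 * (tz a + tz b + a * b)" using h by algebra
  then show ?thesis by simp
qed

lemma tz_diff: "tz (a - b) = tz a + tz b + b - a * b"
proof -
  have h: "2 * tz (a - b) = (a-b)*(a-b-1)" "2 * tz a = a*(a-1)" "2 * tz b = b*(b-1)" by (rule tz2)+
  have "2 * tz (a - b) = 2 * (tz a + tz b + b - a * b)" using h by algebra
  then show ?thesis by simp
qed

lemma tz_uminus: "tz (- a) = tz a + a"
proof -
  have h: "2 * tz (- a) = (-a)*(-a-1)" "2 * tz a = a*(a-1)" by (rule tz2)+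
  have "2 * tz (- a) = 2 * (tz a + a)" using h by algebra
  then show ?thesis by simp
qed

lemma tz_mult: "tz (c * t) = c * c * tz t + tz c * t"
proof -
  have h: "2 * tz (c*t) = (c*t)*(c*t-1)" "2 * tz t = t*(t-1)" "2 * tz c = c*(c-1)" by (rule tz2)+
  have "2 * tz (c * t) = 2 * (c * c * tz t + tz c * t)" using h by algebra
  then show ?thesis by simp
qed

lemma m1_eq: "even a = even b \<Longrightarrow> (-1::real) powi a = (-1) powi b" by (simp add: m1_powi)
lemma m1_neq: "even a = odd b \<Longrightarrow> (-1::real) powi a = - ((-1) powi b)" by (simp add: m1_powi)

lemma tz_num: "tz 0 = 0" "tz 1 = 0" "tz 2 = 1" "tz 3 = 3" "tz 5 = 10"
  by (simp_all add: tz_def)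

lemmas tzs = tz_add tz_diff tz_uminus tz_mult tz_num

lemma schr_P1: assumes "q \<noteq> 0"
  shows "thT 150 40 q (b+2*t) * thT 50 20 q b = thT 50 10 q (b+3*t) * thT 150 50 q (b+t)"
proof -
  have e: "int 150 * tz (b+2*t) + int 40 * (b+2*t) + int 50 * tz b + int 20 * b
     = int 50 * tz (b+3*t) + int 10 * (b+3*t) + int 150 * tz (b+t) + int 50 * (b+t)"
    by (simp add: tzs algebra_simps)
  have s: "(-1::real) powi ((b+2*t) + b) = (-1) powi ((b+3*t) + (b+t))"
    by (rule m1_eq) presburger
  show ?thesis by (simp only: thT_mult[OF assms] e s)
qed

lemma schr_P2: assumes "q \<noteq> 0"
  shows "q^10 * (thT 150 10 q (b+2*t) * thT 50 20 q b) = - (thT 50 10 q (1-2*b-3*t) * thT 150 50 q t)"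
proof -
  have e: "10 + (int 150 * tz (b+2*t) + int 10 * (b+2*t) + int 50 * tz b + int 20 * b)
     = int 50 * tz (1-2*b-3*t) + int 10 * (1-2*b-3*t) + int 150 * tz t + int 50 * t"
    by (simp add: tzs algebra_simps) (use tz2[of b] in algebra)
  have s: "(-1::real) powi ((b+2*t) + b) = - ((-1) powi ((1-2*b-3*t) + t))"
    by (rule m1_neq) presburger
  have "q^10 * (thT 150 10 q (b+2*t) * thT 50 20 q b)
      = (-1::real) powi ((b+2*t) + b) * (q powi 10 * q powi (int 150 * tz (b+2*t) + int 10 * (b+2*t) + int 50 * tz b + int 20 * b))"
    by (simp only: thT_mult[OF assms] power_int_numeral) (simp add: algebra_simps)
  also have "q powi 10 * q powi (int 150 * tz (b+2*t) + int 10 * (b+2*t) + int 50 * tz b + int 20 * b)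
      = q powi (10 + (int 150 * tz (b+2*t) + int 10 * (b+2*t) + int 50 * tz b + int 20 * b))"
    by (rule power_int_add[symmetric]) (use assms in simp)
  finally show ?thesis by (simp only: thT_mult[OF assms] e s)
qed

lemma schr_P3: assumes "q \<noteq> 0"
  shows "thT 150 40 q (b+2*t+1) * thT 50 20 q b = q^10 * (thT 150 10 q (-t) * thT 50 20 q (-2*b-3*t-1))"
proof -
  have e: "10 + (int 150 * tz (-t) + int 10 * (-t) + int 50 * tz (-2*b-3*t-1) + int 20 * (-2*b-3*t-1))
     = int 150 * tz (b+2*t+1) + int 40 * (b+2*t+1) + int 50 * tz b + int 20 * b"
    by (simp add: tzs)
  have s: "(-1::real) powi ((b+2*t+1) + b) = (-1) powi ((-t) + (-2*b-3*t-1))"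
    by (rule m1_eq) presburger
  have "q^10 * (thT 150 10 q (-t) * thT 50 20 q (-2*b-3*t-1))
      = (-1::real) powi ((-t) + (-2*b-3*t-1)) * (q powi 10 * q powi (int 150 * tz (-t) + int 10 * (-t) + int 50 * tz (-2*b-3*t-1) + int 20 * (-2*b-3*t-1)))"
    by (simp only: thT_mult[OF assms] power_int_numeral) (simp add: algebra_simps)
  also have "q powi 10 * q powi (int 150 * tz (-t) + int 10 * (-t) + int 50 * tz (-2*b-3*t-1) + int 20 * (-2*b-3*t-1))
      = q powi (10 + (int 150 * tz (-t) + int 10 * (-t) + int 50 * tz (-2*b-3*t-1) + int 20 * (-2*b-3*t-1)))"
    by (rule power_int_add[symmetric]) (use assms in simp)
  finally show ?thesis by (simp only: thT_mult[OF assms] e s)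
qed


theorem schroeter:
  assumes q: "0 < q" "q < 1"
  shows "(TP 150 40 q - q^10 * TP 150 10 q) * TP 50 20 q = TP 50 10 q * TP 150 50 q"
proof -
  have q0: "q \<noteq> 0" using q by simp
  define f1 where "f1 = (\<lambda>p. thT 150 40 q (fst p) * thT 50 20 q (snd p))"
  define f2 where "f2 = (\<lambda>p. thT 150 10 q (fst p) * thT 50 20 q (snd p))"
  define fr where "fr = (\<lambda>p. thT 50 10 q (fst p) * thT 150 50 q (snd p))"
  have hs1: "(f1 has_sum (TP 150 40 q * TP 50 20 q)) UNIV"
    unfolding f1_def by (intro has_sum_times theta_hs(1) q) auto
  have hs2: "(f2 has_sum (TP 150 10 q * TP 50 20 q)) UNIV"
    unfolding f2_def by (intro has_sum_times theta_hs(1) q) auto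
  have hsr: "(fr has_sum (TP 50 10 q * TP 150 50 q)) UNIV"
    unfolding fr_def by (intro has_sum_times theta_hs(1) q) auto
  define g1 :: "int \<times> int \<Rightarrow> int \<times> int" where "g1 = (\<lambda>p. (fst p + 2 * snd p, fst p))"
  define g2 :: "int \<times> int \<Rightarrow> int \<times> int" where "g2 = (\<lambda>p. (fst p + 2 * snd p + 1, fst p))"
  define h1 :: "int \<times> int \<Rightarrow> int \<times> int" where "h1 = (\<lambda>p. (fst p + 3 * snd p, fst p + snd p))"
  define h2 :: "int \<times> int \<Rightarrow> int \<times> int" where "h2 = (\<lambda>p. (1 - 2 * fst p - 3 * snd p, snd p))"
  define sg :: "int \<times> int \<Rightarrow> int \<times> int" where "sg = (\<lambda>p. (- 2 * fst p - 3 * snd p - 1, fst p + snd p))"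
  have ig1: "inj g1" unfolding g1_def inj_def by auto
  have ig2: "inj g2" unfolding g2_def inj_def by auto
  have ih1: "inj h1" unfolding h1_def inj_def by auto
  have ih2: "inj h2" unfolding h2_def inj_def by auto
  have Dg: "range g1 \<inter> range g2 = {}"
  proof -
    have "g1 x \<noteq> g2 y" for x y unfolding g1_def g2_def by auto presburger
    then show ?thesis by blast
  qed
  have Dh: "range h1 \<inter> range h2 = {}"
  proof -
    have "h1 x \<noteq> h2 y" for x y unfolding h1_def h2_def by auto presburger
    then show ?thesis by blast
  qed
  have Ug: "range g1 \<union> range g2 = UNIV"
  proof -
    have "p \<in> range g1 \<union> range g2" for p
    proof (cases "even (fst p - snd p)")
      case True
      then have "g1 (snd p, (fst p - snd p) div 2) = p" unfolding g1_def by (cases p) auto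
      then show ?thesis by (metis UnI1 rangeI)
    next
      case False
      then have "g2 (snd p, (fst p - snd p) div 2) = p" unfolding g2_def
        by (cases p) (auto; presburger)
      then show ?thesis by (metis UnI2 rangeI)
    qed
    then show ?thesis by blast
  qed
  have Uh: "range h1 \<union> range h2 = UNIV"
  proof -
    have "p \<in> range h1 \<union> range h2" for p
    proof (cases "even (fst p - snd p)")
      case True
      then have "h1 (snd p - (fst p - snd p) div 2, (fst p - snd p) div 2) = p" unfolding h1_def
        by (cases p) (auto; presburger)
      then show ?thesis by (metis UnI1 rangeI)
    next
      case False
      then have "h2 ((1 - fst p - 3 * snd p) div 2, snd p) = p" unfolding h2_def
        by (cases p) (auto; presburger)
      then show ?thesis by (metis UnI2 rangeI)
    qed
    then show ?thesis by blast
  qed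
  have bsg: "bij sg"
  proof (rule o_bij[where g = "\<lambda>p. (3 * snd p + fst p + 1, - 2 * snd p - fst p - 1)"])
    show "(\<lambda>p. (3 * snd p + fst p + 1, - 2 * snd p - fst p - 1)) \<circ> sg = id"
      unfolding sg_def by (auto simp: fun_eq_iff)
    show "sg \<circ> (\<lambda>p. (3 * snd p + fst p + 1, - 2 * snd p - fst p - 1)) = id"
      unfolding sg_def by (auto simp: fun_eq_iff)
  qed
  note S1 = has_sum_split2[OF hs1 ig1 ig2 Dg Ug]
  note S2 = has_sum_split2[OF hs2 ig1 ig2 Dg Ug]
  note SR = has_sum_split2[OF hsr ih1 ih2 Dh Uh]
  define A1 where "A1 = infsum f1 (range g1)"
  define B1 where "B1 = infsum f1 (range g2)"
  define A2 where "A2 = infsum f2 (range g1)"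
  define B2 where "B2 = infsum f2 (range g2)"
  define C1 where "C1 = infsum fr (range h1)"
  define C2 where "C2 = infsum fr (range h2)"
  have e1: "f1 \<circ> g1 = fr \<circ> h1"
    unfolding f1_def fr_def g1_def h1_def comp_def using schr_P1[OF q0] by auto
  have e2: "(\<lambda>p. q^10 * (f2 \<circ> g1) p) = (\<lambda>p. - (fr \<circ> h2) p)"
    unfolding f2_def fr_def g1_def h2_def comp_def using schr_P2[OF q0] by auto
  have e3: "f1 \<circ> g2 = (\<lambda>p. q^10 * ((f2 \<circ> g2) \<circ> sg) p)"
    unfolding f1_def f2_def g2_def sg_def comp_def using schr_P3[OF q0]
    by (auto simp: fun_eq_iff algebra_simps)
  have "A1 = C1" unfolding A1_def C1_def by (rule has_sum_unique[OF S1(1)[unfolded e1] SR(1)])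
  moreover have "q^10 * A2 = - C2"
  proof -
    have "((\<lambda>p. q^10 * (f2 \<circ> g1) p) has_sum (q^10 * A2)) UNIV"
      unfolding A2_def by (rule has_sum_cmult_right[OF S2(1)])
    moreover have "((\<lambda>p. - (fr \<circ> h2) p) has_sum (- C2)) UNIV"
      unfolding C2_def has_sum_uminus minus_minus by (rule SR(2))
    ultimately show ?thesis unfolding e2 by (rule has_sum_unique)
  qed
  moreover have "B1 = q^10 * B2"
  proof -
    have "((f2 \<circ> g2) \<circ> sg has_sum B2) UNIV" unfolding B2_def by (rule has_sum_bij[OF bsg S2(2)])
    then have "((\<lambda>p. q^10 * ((f2 \<circ> g2) \<circ> sg) p) has_sum (q^10 * B2)) UNIV"
      by (rule has_sum_cmult_right)
    then show ?thesis unfolding B1_def by (rule has_sum_unique[OF S1(2)[unfolded e3]])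
  qed
  moreover have "TP 150 40 q * TP 50 20 q = A1 + B1" using S1(3) by (simp add: A1_def B1_def)
  moreover have "TP 150 10 q * TP 50 20 q = A2 + B2" using S2(3) by (simp add: A2_def B2_def)
  moreover have "TP 50 10 q * TP 150 50 q = C1 + C2" using SR(3) by (simp add: C1_def C2_def)
  ultimately show ?thesis by (simp add: algebra_simps)
qed


lemma has_sum_mod:
  fixes h :: "int \<Rightarrow> real"
  assumes hs: "(h has_sum S) UNIV" and d: "0 < d"
  shows "S = (\<Sum>r<d. infsum (\<lambda>m. h (int d * m + int r)) UNIV)"
proof -
  define \<phi> :: "nat \<times> int \<Rightarrow> int" where "\<phi> = (\<lambda>p. int d * snd p + int (fst p))"
  have inj: "inj_on \<phi> ({..<d} \<times> UNIV)"
  proof (rule inj_onI)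
    fix x y assume x: "x \<in> {..<d} \<times> UNIV" and y: "y \<in> {..<d} \<times> UNIV" and e: "\<phi> x = \<phi> y"
    obtain r m where xr: "x = (r, m)" by (cases x)
    obtain r' m' where yr: "y = (r', m')" by (cases y)
    have rd: "r < d" "r' < d" using x y xr yr by auto
    have e': "int d * m + int r = int d * m' + int r'" using e xr yr by (simp add: \<phi>_def)
    have "(int d * m + int r) mod int d = int r" using rd d by simp
    moreover have "(int d * m' + int r') mod int d = int r'" using rd d by simp
    ultimately have "r = r'" using e' by simp
    then have "m = m'" using e' d by simp
    then show "x = y" using xr yr \<open>r = r'\<close> by simp
  qed
  have img: "\<phi> ` ({..<d} \<times> UNIV) = UNIV"
  proof -
    have "k \<in> \<phi> ` ({..<d} \<times> UNIV)" for k
    proof -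
      have "k = int d * (k div int d) + int (nat (k mod int d))" using d by simp
      moreover have "nat (k mod int d) < d" using d by (simp add: nat_less_iff)
      ultimately show ?thesis unfolding \<phi>_def
        by (intro image_eqI[where x = "(nat (k mod int d), k div int d)"]) auto
    qed
    then show ?thesis by blast
  qed
  have hs': "((h \<circ> \<phi>) has_sum S) ({..<d} \<times> UNIV)"
    using hs has_sum_reindex[OF inj, of h S] img by simp
  have "S = infsum (h \<circ> \<phi>) ({..<d} \<times> UNIV)" using hs' by (simp add: infsumI)
  also have "\<dots> = infsum (\<lambda>r. infsum (\<lambda>m. (h \<circ> \<phi>) (r, m)) UNIV) {..<d}"
    using infsum_Sigma_banach[of "h \<circ> \<phi>" "{..<d}" "\<lambda>_. UNIV"] hs' has_sum_imp_summable by fastforce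
  also have "\<dots> = (\<Sum>r<d. infsum (\<lambda>m. h (int d * m + int r)) UNIV)"
    by (simp add: \<phi>_def)
  finally show ?thesis .
qed

lemma thT_shift:
  assumes q: "q \<noteq> 0"
    and s: "(-1::real) powi k = s * (-1) powi m"
    and e: "int N * tz k + int j * k = int c + (int M * tz m + int i * m)"
  shows "thT N j q k = s * q^c * thT M i q m"
proof -
  have "thT N j q k = s * (-1) powi m * q powi (int c + (int M * tz m + int i * m))"
    unfolding thT_def s e by simp
  also have "q powi (int c + (int M * tz m + int i * m)) = q^c * q powi (int M * tz m + int i * m)"
    using q by (simp add: power_int_add)
  finally show ?thesis unfolding thT_def by (simp add: algebra_simps)
qed

lemma m1_sgn: "(-1::real) powi k = (if even k = even m then 1 else -1) * (-1) powi m"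
  by (simp add: m1_powi)

lemma tz4: "tz 4 = 6" by (simp add: tz_def)

lemma cls0: assumes q: "q \<noteq> 0" shows "thT 6 2 q (5*m) = thT 150 70 q m"
proof -
  have p: "even (5*m) = even m" by presburger
  have s: "(-1::real) powi (5*m) = 1 * (-1) powi m" using m1_eq[OF p] by (simp only: mult_1)
  have e: "int 6 * tz (5*m) + int 2 * (5*m) = int 0 + (int 150 * tz m + int 70 * m)"
    by (simp add: tzs tz4 algebra_simps) (use tz2[of m] in algebra)
  show ?thesis using thT_shift[OF q s e] by simp
qed

lemma cls1: assumes q: "q \<noteq> 0" shows "thT 6 2 q (5*m+1) = - (q^2 * thT 150 100 q m)"
proof -
  have p: "even (5*m+1) = odd m" by presburger
  have s: "(-1::real) powi (5*m+1) = -1 * (-1) powi m" using m1_neq[OF p] by (simp only: mult_minus1)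
  have e: "int 6 * tz (5*m+1) + int 2 * (5*m+1) = int 2 + (int 150 * tz m + int 100 * m)"
    by (simp add: tzs tz4 algebra_simps) (use tz2[of m] in algebra)
  show ?thesis using thT_shift[OF q s e] by simp
qed

lemma cls2: assumes q: "q \<noteq> 0" shows "thT 6 2 q (5*m+2) = q^10 * thT 150 130 q m"
proof -
  have p: "even (5*m+2) = even m" by presburger
  have s: "(-1::real) powi (5*m+2) = 1 * (-1) powi m" using m1_eq[OF p] by (simp only: mult_1)
  have e: "int 6 * tz (5*m+2) + int 2 * (5*m+2) = int 10 + (int 150 * tz m + int 130 * m)"
    by (simp add: tzs tz4 algebra_simps) (use tz2[of m] in algebra)
  show ?thesis using thT_shift[OF q s e] by simp
qed

lemma cls3: assumes q: "q \<noteq> 0" shows "thT 6 2 q (5*m+3) = q^14 * thT 150 10 q (m+1)"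
proof -
  have p: "even (5*m+3) = even (m+1)" by presburger
  have s: "(-1::real) powi (5*m+3) = 1 * (-1) powi (m+1)" using m1_eq[OF p] by (simp only: mult_1)
  have e: "int 6 * tz (5*m+3) + int 2 * (5*m+3) = int 14 + (int 150 * tz (m+1) + int 10 * (m+1))"
    by (simp add: tzs tz4 algebra_simps) (use tz2[of m] in algebra)
  show ?thesis using thT_shift[OF q s e] by simp
qed

lemma cls4: assumes q: "q \<noteq> 0" shows "thT 6 2 q (5*m+4) = - (q^4 * thT 150 40 q (m+1))"
proof -
  have p: "even (5*m+4) = odd (m+1)" by presburger
  have s: "(-1::real) powi (5*m+4) = -1 * (-1) powi (m+1)" using m1_neq[OF p] by (simp only: mult_minus1)
  have e: "int 6 * tz (5*m+4) + int 2 * (5*m+4) = int 4 + (int 150 * tz (m+1) + int 40 * (m+1))"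
    by (simp add: tzs tz4 algebra_simps) (use tz2[of m] in algebra)
  show ?thesis using thT_shift[OF q s e] by simp
qed

lemma has_sum_shift1:
  fixes h :: "int \<Rightarrow> real"
  assumes "(h has_sum S) UNIV" shows "((\<lambda>m. h (m+1)) has_sum S) UNIV"
proof -
  have b: "bij (\<lambda>m::int. m + 1)"
    by (rule o_bij[where g = "\<lambda>m. m - 1"]) (auto simp: fun_eq_iff)
  show ?thesis using has_sum_bij[OF b assms] by (simp add: comp_def)
qed

theorem dissection:
  assumes q: "0 < q" "q < 1"
  shows "TP 6 2 q = TP 150 70 q - q^2 * TP 150 100 q + q^10 * TP 150 130 q
                    - q^4 * (TP 150 40 q - q^10 * TP 150 10 q)"
proof -
  have q0: "q \<noteq> 0" using q by simp
  have hs: "(thT 6 2 q has_sum TP 6 2 q) UNIV" by (rule theta_hs(1)) (use q in auto)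
  have T: "\<And>j. 0 < j \<Longrightarrow> j < 150 \<Longrightarrow> (thT 150 j q has_sum TP 150 j q) UNIV"
    by (rule theta_hs(1)) (use q in auto)
  have c0: "infsum (\<lambda>m. thT 6 2 q (int 5 * m + int 0)) UNIV = TP 150 70 q"
    using T[of 70] by (simp add: cls0[OF q0] infsumI)
  have c1: "infsum (\<lambda>m. thT 6 2 q (int 5 * m + int 1)) UNIV = - (q^2 * TP 150 100 q)"
  proof -
    have "((\<lambda>m. - (q^2 * thT 150 100 q m)) has_sum - (q^2 * TP 150 100 q)) UNIV"
      using has_sum_cmult_right[OF T[of 100], of "q^2"] by (simp add: has_sum_uminus)
    then show ?thesis by (simp add: cls1[OF q0] infsumI)
  qed
  have c2: "infsum (\<lambda>m. thT 6 2 q (int 5 * m + int 2)) UNIV = q^10 * TP 150 130 q"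
    using has_sum_cmult_right[OF T[of 130], of "q^10"] by (simp add: cls2[OF q0] infsumI)
  have c3: "infsum (\<lambda>m. thT 6 2 q (int 5 * m + int 3)) UNIV = q^14 * TP 150 10 q"
    using has_sum_cmult_right[OF has_sum_shift1[OF T[of 10]], of "q^14"]
    by (simp add: cls3[OF q0] infsumI)
  have c4: "infsum (\<lambda>m. thT 6 2 q (int 5 * m + int 4)) UNIV = - (q^4 * TP 150 40 q)"
  proof -
    have "((\<lambda>m. - (q^4 * thT 150 40 q (m+1))) has_sum - (q^4 * TP 150 40 q)) UNIV"
      using has_sum_cmult_right[OF has_sum_shift1[OF T[of 40]], of "q^4"] by (simp add: has_sum_uminus)
    then show ?thesis by (simp add: cls4[OF q0] infsumI)
  qed
  have "TP 6 2 q = (\<Sum>r<5. infsum (\<lambda>m. thT 6 2 q (int 5 * m + int r)) UNIV)"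
    by (rule has_sum_mod[OF hs]) simp
  also have "\<dots> = infsum (\<lambda>m. thT 6 2 q (int 5 * m + int 0)) UNIV
      + infsum (\<lambda>m. thT 6 2 q (int 5 * m + int 1)) UNIV
      + infsum (\<lambda>m. thT 6 2 q (int 5 * m + int 2)) UNIV
      + infsum (\<lambda>m. thT 6 2 q (int 5 * m + int 3)) UNIV
      + infsum (\<lambda>m. thT 6 2 q (int 5 * m + int 4)) UNIV"
    by (simp add: numeral_eq_Suc del: of_nat_Suc)
  also have "\<dots> = TP 150 70 q - q^2 * TP 150 100 q + q^10 * TP 150 130 q
                    - q^4 * (TP 150 40 q - q^10 * TP 150 10 q)"
    unfolding c0 c1 c2 c3 c4 by (simp add: algebra_simps flip: power_add)
  finally show ?thesis .
qed


definition nn :: "real fps \<Rightarrow> bool" where "nn F \<longleftrightarrow> (\<forall>n. 0 \<le> fps_nth F n)"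
definition ev :: "real fps \<Rightarrow> real \<Rightarrow> real \<Rightarrow> bool" where "ev F x s \<longleftrightarrow> (\<lambda>n. fps_nth F n * x^n) sums s"

lemma nn_mult: "nn F \<Longrightarrow> nn G \<Longrightarrow> nn (F * G)"
  unfolding nn_def fps_mult_nth by (auto intro!: sum_nonneg)

lemma nn_one: "nn 1" unfolding nn_def by simp

lemma nn_power: "nn F \<Longrightarrow> nn (F ^ m)"
  by (induction m) (auto intro: nn_mult nn_one)

lemma ev_mult:
  assumes F: "nn F" and G: "nn G" and x: "0 \<le> x" and eF: "ev F x s" and eG: "ev G x t"
  shows "ev (F * G) x (s * t)"
proof -
  have a: "summable (\<lambda>k. norm (fps_nth F k * x^k))"
    using eF F x unfolding ev_def nn_def by (simp add: sums_iff)
  have b: "summable (\<lambda>k. norm (fps_nth G k * x^k))"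
    using eG G x unfolding ev_def nn_def by (simp add: sums_iff)
  have "(\<lambda>k. \<Sum>i\<le>k. fps_nth F i * x^i * (fps_nth G (k-i) * x^(k-i))) sums ((\<Sum>k. fps_nth F k * x^k) * (\<Sum>k. fps_nth G k * x^k))"
    by (rule Cauchy_product_sums[OF a b])
  moreover have "(\<Sum>k. fps_nth F k * x^k) = s" "(\<Sum>k. fps_nth G k * x^k) = t"
    using eF eG unfolding ev_def by (auto simp: sums_iff)
  moreover have "(\<Sum>i\<le>k. fps_nth F i * x^i * (fps_nth G (k-i) * x^(k-i))) = fps_nth (F * G) k * x^k" for k
  proof -
    have "(\<Sum>i\<le>k. fps_nth F i * x^i * (fps_nth G (k-i) * x^(k-i))) = (\<Sum>i\<le>k. fps_nth F i * fps_nth G (k-i) * x^k)"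
    proof (intro sum.cong refl)
      fix i assume "i \<in> {..k}"
      then have "x^i * x^(k-i) = x^k" by (simp flip: power_add)
      then show "fps_nth F i * x^i * (fps_nth G (k-i) * x^(k-i)) = fps_nth F i * fps_nth G (k-i) * x^k"
        by (metis mult.commute mult.left_commute)
    qed
    also have "\<dots> = fps_nth (F * G) k * x^k"
      by (simp add: fps_mult_nth atLeast0AtMost sum_distrib_right)
    finally show ?thesis .
  qed
  ultimately show ?thesis unfolding ev_def by simp
qed

lemma ev_one: "ev 1 x 1"
proof -
  have "(\<lambda>n. fps_nth (1::real fps) n * x^n) = (\<lambda>n. if n = 0 then 1 else 0)"
    by (auto simp: fun_eq_iff)
  then show ?thesis unfolding ev_def using sums_single[of 0 "\<lambda>_. 1::real"] by simp
qed

lemma ev_power: "nn F \<Longrightarrow> 0 \<le> x \<Longrightarrow> ev F x s \<Longrightarrow> ev (F ^ m) x (s ^ m)"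
proof (induction m)
  case 0 then show ?case by (simp add: ev_one)
next
  case (Suc m)
  then have "ev (F * F ^ m) x (s * s ^ m)" by (intro ev_mult nn_power) auto
  then show ?case by simp
qed

definition geo :: "nat \<Rightarrow> real fps" where "geo k = Abs_fps (\<lambda>n. if k dvd n then 1 else 0)"

lemma geo_nth: "fps_nth (geo k) n = (if k dvd n then 1 else 0)" by (simp add: geo_def)

lemma geo_0: "geo 0 = 1" by (auto simp: fps_eq_iff geo_nth)

lemma nn_geo: "nn (geo k)" unfolding nn_def geo_nth by simp

lemma ev_geo:
  assumes k: "0 < k" and x: "0 \<le> x" "x < 1"
  shows "ev (geo k) x (1 / (1 - x^k))"
proof -
  have xk: "norm (x^k) < 1" using x k by (simp add: power_less_one_iff abs_of_nonneg)
  have "(\<lambda>j. (x^k)^j) sums (1 / (1 - x^k))" using geometric_sums[OF xk] .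
  then have "(\<lambda>j. fps_nth (geo k) (k*j) * x^(k*j)) sums (1 / (1 - x^k))"
    by (simp add: geo_nth power_mult)
  moreover have "strict_mono (\<lambda>j. k * j)" using k by (auto simp: strict_mono_def)
  moreover have z: "\<And>n. n \<notin> range (\<lambda>j. k * j) \<Longrightarrow> fps_nth (geo k) n * x^n = 0"
    by (auto simp: geo_nth dvd_def)
  ultimately show ?thesis unfolding ev_def
    using sums_mono_reindex[of "\<lambda>j. k * j" "\<lambda>n. fps_nth (geo k) n * x^n"] by blast
qed

lemma Lg_1: "Lg 1 = 0" by (simp add: Lg_def)

lemma exp_Lg_inv: "y < 1 \<Longrightarrow> exp (Lg y) = 1 / (1 - y)"
  unfolding Lg_def by (simp add: exp_minus inverse_eq_divide)

lemma ev_geo_pow: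
  assumes x: "0 \<le> x" "x < 1"
  shows "ev (geo k ^ m) x (exp (real m * Lg (x^k)))"
proof (cases "k = 0")
  case True
  then show ?thesis by (simp add: geo_0 Lg_1 ev_one)
next
  case False
  have xk: "x^k < 1" using x False by (simp add: power_less_one_iff)
  have "ev (geo k ^ m) x ((1 / (1 - x^k)) ^ m)"
    using False x by (intro ev_power ev_geo nn_geo) auto
  moreover have "exp (real m * Lg (x^k)) = (1 / (1 - x^k)) ^ m"
    using xk by (simp add: exp_of_nat_mult exp_Lg_inv)
  ultimately show ?thesis by simp
qed


definition CC :: "(nat \<Rightarrow> nat) \<Rightarrow> nat \<Rightarrow> real fps" where
  "CC \<mu> M = (\<Prod>k<M. geo k ^ \<mu> k)"

lemma CC_Suc: "CC \<mu> (Suc M) = CC \<mu> M * geo M ^ \<mu> M"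
  by (simp add: CC_def)

lemma nn_CC: "nn (CC \<mu> M)"
  by (induction M) (auto simp: CC_Suc intro!: nn_mult nn_power nn_geo, simp add: CC_def nn_one)

lemma geo_nth0: "fps_nth (geo k) 0 = 1" by (simp add: geo_nth)

lemma geo_low: "0 < n \<Longrightarrow> n < k \<Longrightarrow> fps_nth (geo k) n = 0"
  by (auto simp: geo_nth dest: dvd_imp_le)

lemma mult_geo_low:
  assumes "n < k" shows "fps_nth (F * geo k) n = fps_nth F n"
proof -
  have "fps_nth (F * geo k) n = (\<Sum>i=0..n. fps_nth F i * fps_nth (geo k) (n - i))"
    by (rule fps_mult_nth)
  also have "\<dots> = (\<Sum>i\<in>insert n {0..<n}. fps_nth F i * fps_nth (geo k) (n - i))"
    by (simp add: atLeastLessThanSuc_atLeastAtMost[symmetric] atLeastLessThanSuc)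
  also have "\<dots> = fps_nth F n * fps_nth (geo k) 0 + (\<Sum>i\<in>{0..<n}. fps_nth F i * fps_nth (geo k) (n - i))"
    by (simp add: sum.insert)
  also have "(\<Sum>i\<in>{0..<n}. fps_nth F i * fps_nth (geo k) (n - i)) = 0"
    using assms by (intro sum.neutral) (auto simp: geo_low)
  finally show ?thesis by (simp add: geo_nth0)
qed

lemma mult_geo_pow_low:
  assumes "n < k" shows "fps_nth (F * geo k ^ m) n = fps_nth F n"
proof (induction m)
  case 0 then show ?case by simp
next
  case (Suc m)
  have "F * geo k ^ Suc m = (F * geo k ^ m) * geo k" by (simp only: power_Suc2 mult.assoc)
  then have "fps_nth (F * geo k ^ Suc m) n = fps_nth (F * geo k ^ m) n"
    using mult_geo_low[OF assms, of "F * geo k ^ m"] by (simp only:)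
  then show ?case using Suc by simp
qed

lemma CC_stab: "n < M \<Longrightarrow> fps_nth (CC \<mu> (Suc M)) n = fps_nth (CC \<mu> M) n"
  unfolding CC_Suc by (rule mult_geo_pow_low)

lemma CC_stab2: "n < M \<Longrightarrow> fps_nth (CC \<mu> M) n = fps_nth (CC \<mu> (Suc n)) n"
proof (induction M)
  case 0 then show ?case by simp
next
  case (Suc M)
  show ?case
  proof (cases "n < M")
    case True
    then show ?thesis using Suc CC_stab[OF True] by simp
  next
    case False
    then have "M = n" using Suc by simp
    then show ?thesis by simp
  qed
qed

lemma mult_ge2:
  assumes "nn F" "nn H"
  shows "fps_nth F n * fps_nth H 0 \<le> fps_nth (F * H) n"
proof -
  have "fps_nth F n * fps_nth H (n - n) \<le> (\<Sum>i=0..n. fps_nth F i * fps_nth H (n - i))"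
    using assms unfolding nn_def by (intro member_le_sum) auto
  then show ?thesis by (simp add: fps_mult_nth)
qed

lemma geo_pow_0: "fps_nth (geo k ^ m) 0 = 1"
  by (induction m) (auto simp: geo_nth0)

lemma CC_mono: "fps_nth (CC \<mu> M) n \<le> fps_nth (CC \<mu> (Suc M)) n"
  using mult_ge2[OF nn_CC nn_power[OF nn_geo], of \<mu> M n M "\<mu> M"]
  by (simp add: CC_Suc geo_pow_0)

lemma CC_mono2: "M \<le> M' \<Longrightarrow> fps_nth (CC \<mu> M) n \<le> fps_nth (CC \<mu> M') n"
  by (rule lift_Suc_mono_le[of "\<lambda>M. fps_nth (CC \<mu> M) n"]) (rule CC_mono)

definition supd :: "nat \<Rightarrow> real fps \<Rightarrow> bool" where
  "supd d F \<longleftrightarrow> (\<forall>n. \<not> d dvd n \<longrightarrow> fps_nth F n = 0)"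

lemma supd_mult: assumes "supd d F" "supd d G" shows "supd d (F * G)"
  unfolding supd_def
proof (intro allI impI)
  fix n assume n: "\<not> d dvd n"
  have "fps_nth F i * fps_nth G (n - i) = 0" if "i \<in> {0..n}" for i
  proof (cases "d dvd i")
    case True
    have "\<not> d dvd (n - i)"
    proof
      assume "d dvd (n - i)"
      with True have "d dvd (i + (n - i))" by (rule dvd_add)
      with that n show False by simp
    qed
    then show ?thesis using assms(2) by (simp add: supd_def)
  next
    case False then show ?thesis using assms(1) by (simp add: supd_def)
  qed
  then show "fps_nth (F * G) n = 0" unfolding fps_mult_nth by (intro sum.neutral) blast
qed

lemma supd_one: "supd d 1" unfolding supd_def by auto

lemma supd_power: "supd d F \<Longrightarrow> supd d (F ^ m)"
  by (induction m) (auto intro: supd_mult supd_one)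

lemma supd_geo: "d dvd k \<Longrightarrow> supd d (geo k)"
  unfolding supd_def geo_nth by (auto intro: dvd_trans)

lemma supd_CC: assumes "\<forall>k. \<mu> k \<noteq> 0 \<longrightarrow> d dvd k" shows "supd d (CC \<mu> M)"
proof (induction M)
  case 0 then show ?case by (simp add: CC_def supd_one)
next
  case (Suc M)
  have "supd d (geo M ^ \<mu> M)"
  proof (cases "\<mu> M = 0")
    case True then show ?thesis by (simp add: supd_one)
  next
    case False then show ?thesis using assms by (intro supd_power supd_geo) auto
  qed
  then show ?case using Suc by (simp add: CC_Suc supd_mult)
qed

lemma prod_geo_0: "finite A \<Longrightarrow> fps_nth (\<Prod>k\<in>A. geo k ^ \<mu> k) 0 = 1"
  by (induction A rule: finite_induct) (auto simp: geo_pow_0)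

lemma nn_prod_geo: "finite A \<Longrightarrow> nn (\<Prod>k\<in>A. geo k ^ \<mu> k)"
  by (induction A rule: finite_induct) (auto intro!: nn_mult nn_power nn_geo nn_one)

lemma CC_pos:
  assumes d: "0 < d" and md: "1 \<le> \<mu> d" and M: "d < M"
  shows "0 < fps_nth (CC \<mu> M) (d * j)"
proof -
  define R where "R = geo d ^ (\<mu> d - 1) * (\<Prod>k\<in>{..<M} - {d}. geo k ^ \<mu> k)"
  have "CC \<mu> M = geo d ^ \<mu> d * (\<Prod>k\<in>{..<M} - {d}. geo k ^ \<mu> k)"
    unfolding CC_def using M by (subst prod.remove[of _ d]) auto
  also have "geo d ^ \<mu> d = geo d * geo d ^ (\<mu> d - 1)"
    using md by (metis Suc_diff_1 less_le_trans zero_less_one power_Suc)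
  finally have C: "CC \<mu> M = geo d * R" by (simp add: R_def mult.assoc)
  have nR: "nn R" unfolding R_def by (intro nn_mult nn_power nn_geo nn_prod_geo) auto
  have R0: "fps_nth R 0 = 1" unfolding R_def by (simp add: geo_pow_0 prod_geo_0)
  have "fps_nth (geo d) (d * j) * fps_nth R 0 \<le> fps_nth (geo d * R) (d * j)"
    by (rule mult_ge2[OF nn_geo nR])
  then show ?thesis using R0 C by (simp add: geo_nth)
qed

definition Wm :: "(nat \<Rightarrow> nat) \<Rightarrow> real \<Rightarrow> real" where
  "Wm \<mu> x = (\<Sum>k. real (\<mu> k) * Lg (x^k))"

lemma Lg_pow_nonneg: "0 \<le> x \<Longrightarrow> x < 1 \<Longrightarrow> 0 \<le> Lg (x^k)"
proof (cases k)
  case 0 then show ?thesis by (simp add: Lg_1)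
next
  case (Suc m)
  assume "0 \<le> x" "x < 1"
  then have "x^k < 1" using Suc aq_lt1[of x x m] by simp
  then show ?thesis using \<open>0 \<le> x\<close> by (intro Lg_nonneg) auto
qed

lemma summable_Lg_pow: assumes "0 \<le> x" "x < 1" shows "summable (\<lambda>k. Lg (x^k))"
proof -
  have "summable (\<lambda>k. Lg (x * x^k))" using assms by (intro summable_Lg_geom) auto
  then have "summable (\<lambda>k. Lg (x^Suc k))" by simp
  then show ?thesis by (subst summable_Suc_iff[symmetric])
qed

lemma summable_Wm:
  assumes B: "\<forall>k. \<mu> k \<le> B" and x: "0 \<le> x" "x < 1"
  shows "summable (\<lambda>k. real (\<mu> k) * Lg (x^k))"
proof (rule summable_comparison_test'[OF summable_mult[OF summable_Lg_pow[OF x], of "real B"]])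
  fix k
  have "real (\<mu> k) * Lg (x^k) \<le> real B * Lg (x^k)"
    using B Lg_pow_nonneg[OF x, of k] by (intro mult_right_mono) auto
  then show "norm (real (\<mu> k) * Lg (x^k)) \<le> real B * Lg (x^k)"
    using Lg_pow_nonneg[OF x, of k] by simp
qed

lemma ev_CC: assumes x: "0 \<le> x" "x < 1"
  shows "ev (CC \<mu> M) x (exp (\<Sum>k<M. real (\<mu> k) * Lg (x^k)))"
proof (induction M)
  case 0 then show ?case by (simp add: CC_def ev_one)
next
  case (Suc M)
  have "ev (CC \<mu> M * geo M ^ \<mu> M) x (exp (\<Sum>k<M. real (\<mu> k) * Lg (x^k)) * exp (real (\<mu> M) * Lg (x^M)))"
    by (intro ev_mult nn_CC nn_power nn_geo Suc ev_geo_pow x x(1))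
  then show ?case by (simp add: CC_Suc exp_add)
qed

theorem machine:
  assumes B: "\<forall>k. \<mu> k \<le> B" and supp: "\<forall>k. \<mu> k \<noteq> 0 \<longrightarrow> d dvd k"
    and d: "0 < d" and md: "1 \<le> \<mu> d"
  shows "\<exists>c. (\<forall>n. \<not> d dvd n \<longrightarrow> c n = 0) \<and> (\<forall>n. d dvd n \<longrightarrow> 0 < c n) \<and>
             (\<forall>x. 0 \<le> x \<longrightarrow> x < 1 \<longrightarrow> (\<lambda>n. c n * x^n) sums exp (Wm \<mu> x))"
proof -
  define c where "c n = fps_nth (CC \<mu> (Suc (n + d))) n" for n
  have stab: "fps_nth (CC \<mu> M) n = c n" if "n < M" for M n
    using CC_stab2[OF that] CC_stab2[of n "Suc (n + d)" \<mu>] by (simp add: c_def)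
  have le: "fps_nth (CC \<mu> M) n \<le> c n" for M n
  proof (cases "n < M")
    case True then show ?thesis using stab by simp
  next
    case False
    then have "M \<le> Suc (n + d)" by simp
    then show ?thesis unfolding c_def by (rule CC_mono2)
  qed
  have cnn: "0 \<le> c n" for n using nn_CC unfolding c_def nn_def by simp
  have c0: "\<forall>n. \<not> d dvd n \<longrightarrow> c n = 0"
    using supd_CC[OF supp] unfolding c_def supd_def by simp
  have cpos: "\<forall>n. d dvd n \<longrightarrow> 0 < c n"
  proof (intro allI impI)
    fix n assume "d dvd n"
    then obtain j where j: "n = d * j" by (auto simp: dvd_def)
    have "0 < fps_nth (CC \<mu> (Suc (n + d))) (d * j)" using d md by (intro CC_pos) auto
    then show "0 < c n" using j by (simp add: c_def)
  qed
  have sums: "(\<lambda>n. c n * x^n) sums exp (Wm \<mu> x)" if x: "0 \<le> x" "x < 1" for x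
  proof -
    define P where "P = exp (Wm \<mu> x)"
    define PM where "PM M = exp (\<Sum>k<M. real (\<mu> k) * Lg (x^k))" for M
    have sW: "summable (\<lambda>k. real (\<mu> k) * Lg (x^k))" by (rule summable_Wm[OF B x])
    have tnn: "0 \<le> real (\<mu> k) * Lg (x^k)" for k using Lg_pow_nonneg[OF x] by simp
    have PM_le: "PM M \<le> P" for M
      unfolding PM_def P_def Wm_def using sW tnn by (simp add: sum_le_suminf)
    have PM_lim: "PM \<longlonglongrightarrow> P"
      unfolding PM_def P_def Wm_def by (intro tendsto_exp summable_LIMSEQ sW)
    have evM: "(\<lambda>n. fps_nth (CC \<mu> M) n * x^n) sums PM M" for M
      using ev_CC[OF x, of \<mu> M] unfolding ev_def PM_def .
    have tnn2: "0 \<le> fps_nth (CC \<mu> M) n * x^n" for M n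
      using nn_CC[of \<mu> M] x unfolding nn_def by simp
    have partial: "(\<Sum>n<K. c n * x^n) \<le> P" for K
    proof -
      have "(\<Sum>n<K. c n * x^n) = (\<Sum>n<K. fps_nth (CC \<mu> K) n * x^n)"
        using stab by simp
      also have "\<dots> \<le> (\<Sum>n. fps_nth (CC \<mu> K) n * x^n)"
        using evM[of K] tnn2 by (intro sum_le_suminf) (auto simp: sums_iff)
      also have "\<dots> = PM K" using evM[of K] by (simp add: sums_iff)
      finally show ?thesis using PM_le[of K] by simp
    qed
    have cxnn: "0 \<le> c n * x^n" for n using cnn x by simp
    have sc: "summable (\<lambda>n. c n * x^n)"
      by (rule summableI_nonneg_bounded[OF cxnn partial])
    have le1: "(\<Sum>n. c n * x^n) \<le> P"
      by (rule suminf_le_const[OF sc partial])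
    have le2: "PM M \<le> (\<Sum>n. c n * x^n)" for M
    proof -
      have "PM M = (\<Sum>n. fps_nth (CC \<mu> M) n * x^n)" using evM[of M] by (simp add: sums_iff)
      also have "\<dots> \<le> (\<Sum>n. c n * x^n)"
        using evM[of M] sc le x by (intro suminf_le) (auto simp: sums_iff intro: mult_right_mono)
      finally show ?thesis .
    qed
    have "P \<le> (\<Sum>n. c n * x^n)"
      using PM_lim le2 by (intro LIMSEQ_le_const2) auto
    with le1 have "(\<Sum>n. c n * x^n) = P" by simp
    then show ?thesis using sc unfolding P_def by (simp add: sums_iff)
  qed
  show ?thesis using c0 cpos sums by blast
qed


definition Wa :: "nat \<Rightarrow> nat \<Rightarrow> real \<Rightarrow> real" where
  "Wa a N x = (\<Sum>i. Lg (x^(a + N*i)))"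

lemma pow_lt1: "0 < a \<Longrightarrow> 0 \<le> (x::real) \<Longrightarrow> x < 1 \<Longrightarrow> x^a < 1"
  using aq_lt1[of x x "a - 1"] by (cases a) auto

lemma summable_Wa:
  assumes "0 < a" "0 < N" "0 \<le> x" "x < 1"
  shows "summable (\<lambda>i. Lg (x^(a + N*i)))"
proof -
  have "summable (\<lambda>i. Lg (x^a * (x^N)^i))"
    using assms pow_lt1[of a x] pow_lt1[of N x] by (intro summable_Lg_geom) auto
  then show ?thesis by (simp add: power_add power_mult)
qed

lemma Pinf_Wa: "Pinf (x^a) (x^N) = exp (- Wa a N x)"
  unfolding Pinf_def Wa_def by (simp add: power_add power_mult)

lemma Wa_nonneg_terms: "0 < a \<Longrightarrow> 0 \<le> x \<Longrightarrow> x < 1 \<Longrightarrow> 0 \<le> Lg (x^(a + N*i))"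
  by (intro Lg_nonneg pow_lt1) auto

lemma has_sum_mod_nat:
  fixes h :: "nat \<Rightarrow> real"
  assumes hs: "(h has_sum S) UNIV" and d: "0 < d"
  shows "S = (\<Sum>r<d. infsum (\<lambda>m. h (d * m + r)) UNIV)"
proof -
  define \<phi> :: "nat \<times> nat \<Rightarrow> nat" where "\<phi> = (\<lambda>p. d * snd p + fst p)"
  have inj: "inj_on \<phi> ({..<d} \<times> UNIV)"
  proof (rule inj_onI)
    fix x y assume x: "x \<in> {..<d} \<times> UNIV" and y: "y \<in> {..<d} \<times> UNIV" and e: "\<phi> x = \<phi> y"
    obtain r m where xr: "x = (r, m)" by (cases x)
    obtain r' m' where yr: "y = (r', m')" by (cases y)
    have rd: "r < d" "r' < d" using x y xr yr by auto
    have e': "d * m + r = d * m' + r'" using e xr yr by (simp add: \<phi>_def)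
    have "(d * m + r) mod d = r" using rd by simp
    moreover have "(d * m' + r') mod d = r'" using rd by simp
    ultimately have "r = r'" using e' by simp
    then have "m = m'" using e' d by simp
    then show "x = y" using xr yr \<open>r = r'\<close> by simp
  qed
  have img: "\<phi> ` ({..<d} \<times> UNIV) = UNIV"
  proof -
    have "k \<in> \<phi> ` ({..<d} \<times> UNIV)" for k
    proof -
      have "k = d * (k div d) + k mod d" by simp
      moreover have "k mod d < d" using d by simp
      ultimately show ?thesis unfolding \<phi>_def
        by (intro image_eqI[where x = "(k mod d, k div d)"]) auto
    qed
    then show ?thesis by blast
  qed
  have hs': "((h \<circ> \<phi>) has_sum S) ({..<d} \<times> UNIV)"
    using hs has_sum_reindex[OF inj, of h S] img by simp
  have "S = infsum (h \<circ> \<phi>) ({..<d} \<times> UNIV)" using hs' by (simp add: infsumI)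
  also have "\<dots> = infsum (\<lambda>r. infsum (\<lambda>m. (h \<circ> \<phi>) (r, m)) UNIV) {..<d}"
    using infsum_Sigma_banach[of "h \<circ> \<phi>" "{..<d}" "\<lambda>_. UNIV"] hs' has_sum_imp_summable by fastforce
  also have "\<dots> = (\<Sum>r<d. infsum (\<lambda>m. h (d * m + r)) UNIV)"
    by (simp add: \<phi>_def)
  finally show ?thesis .
qed

lemma Wa_has_sum:
  assumes "0 < a" "0 < N" "0 \<le> x" "x < 1"
  shows "((\<lambda>i. Lg (x^(a + N*i))) has_sum Wa a N x) UNIV"
proof -
  have s: "summable (\<lambda>i. Lg (x^(a + N*i)))" by (rule summable_Wa[OF assms])
  have "summable (\<lambda>i. norm (Lg (x^(a + N*i))))"
    using s Wa_nonneg_terms[OF assms(1,3,4)] by simp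
  then show ?thesis unfolding Wa_def by (rule norm_summable_imp_has_sum[OF _ summable_sums[OF s]])
qed

lemma Wa_refine:
  assumes d: "0 < d" and a: "0 < a" and N: "0 < N" and x: "0 \<le> x" "x < 1"
  shows "Wa a N x = (\<Sum>r<d. Wa (a + N*r) (N*d) x)"
proof -
  have "Wa a N x = (\<Sum>r<d. infsum (\<lambda>m. Lg (x^(a + N*(d*m + r)))) UNIV)"
    by (rule has_sum_mod_nat[OF Wa_has_sum[OF a N x] d])
  also have "\<dots> = (\<Sum>r<d. Wa (a + N*r) (N*d) x)"
  proof (intro sum.cong refl)
    fix r
    have "((\<lambda>m. Lg (x^(a + N*r + N*d*m))) has_sum Wa (a + N*r) (N*d) x) UNIV"
      using Wa_has_sum[of "a + N*r" "N*d" x] a N d x by simp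
    moreover have "(\<lambda>m. Lg (x^(a + N*(d*m + r)))) = (\<lambda>m. Lg (x^(a + N*r + N*d*m)))"
      by (simp add: algebra_simps)
    ultimately show "infsum (\<lambda>m. Lg (x^(a + N*(d*m + r)))) UNIV = Wa (a + N*r) (N*d) x"
      by (simp add: infsumI)
  qed
  finally show ?thesis .
qed

definition ind :: "nat \<Rightarrow> nat \<Rightarrow> nat \<Rightarrow> nat" where
  "ind a N k = (if a \<le> k \<and> N dvd (k - a) then 1 else 0)"

lemma Wa_ind:
  assumes a: "0 < a" and N: "0 < N" and x: "0 \<le> x" "x < 1"
  shows "(\<lambda>k. real (ind a N k) * Lg (x^k)) sums Wa a N x"
proof -
  have "(\<lambda>i. Lg (x^(a + N*i))) sums Wa a N x"
    unfolding Wa_def using summable_Wa[OF a N x] by (rule summable_sums)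
  moreover have "(\<lambda>i. real (ind a N (a + N*i)) * Lg (x^(a + N*i))) = (\<lambda>i. Lg (x^(a + N*i)))"
    by (simp add: ind_def)
  ultimately have "(\<lambda>i. real (ind a N (a + N*i)) * Lg (x^(a + N*i))) sums Wa a N x" by simp
  moreover have "strict_mono (\<lambda>i. a + N*i)" using N by (auto simp: strict_mono_def)
  moreover have "\<And>n. n \<notin> range (\<lambda>i. a + N*i) \<Longrightarrow> real (ind a N n) * Lg (x^n) = 0"
  proof -
    fix n assume n: "n \<notin> range (\<lambda>i. a + N*i)"
    have "ind a N n = 0"
    proof (rule ccontr)
      assume "ind a N n \<noteq> 0"
      then have "a \<le> n" "N dvd (n - a)" by (auto simp: ind_def split: if_splits)
      then obtain j where "n - a = N * j" by (auto simp: dvd_def)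
      then have "n = a + N * j" using \<open>a \<le> n\<close> by simp
      with n show False by blast
    qed
    then show "real (ind a N n) * Lg (x^n) = 0" by simp
  qed
  ultimately show ?thesis using sums_mono_reindex[of "\<lambda>i. a + N*i" "\<lambda>k. real (ind a N k) * Lg (x^k)"]
    by blast
qed

definition muL :: "(nat \<times> nat) list \<Rightarrow> nat \<Rightarrow> nat" where
  "muL L k = sum_list (map (\<lambda>p. ind (fst p) (snd p) k) L)"

definition WL :: "(nat \<times> nat) list \<Rightarrow> real \<Rightarrow> real" where
  "WL L x = sum_list (map (\<lambda>p. Wa (fst p) (snd p) x) L)"

lemma WL_sums:
  assumes L: "\<forall>p\<in>set L. 0 < fst p \<and> 0 < snd p" and x: "0 \<le> x" "x < 1"
  shows "(\<lambda>k. real (muL L k) * Lg (x^k)) sums WL L x"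
  using L
proof (induction L)
  case Nil then show ?case by (simp add: muL_def WL_def)
next
  case (Cons p L)
  have "(\<lambda>k. real (ind (fst p) (snd p) k) * Lg (x^k) + real (muL L k) * Lg (x^k))
          sums (Wa (fst p) (snd p) x + WL L x)"
    using Cons by (intro sums_add Wa_ind x) auto
  then show ?case by (simp add: muL_def WL_def algebra_simps)
qed

lemma muL_le: "muL L k \<le> length L"
proof (induction L)
  case Nil then show ?case by (simp add: muL_def)
next
  case (Cons p L)
  have "ind (fst p) (snd p) k \<le> 1" by (simp add: ind_def)
  then show ?case using Cons by (simp add: muL_def)
qed

theorem machineL:
  assumes L: "\<forall>p\<in>set L. 0 < fst p \<and> 0 < snd p \<and> 5 dvd fst p \<and> 5 dvd snd p"
    and mem: "(5, 150) \<in> set L"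
  shows "\<exists>c. (\<forall>n. \<not> 5 dvd n \<longrightarrow> c n = 0) \<and> (\<forall>n. 5 dvd n \<longrightarrow> 0 < c n) \<and>
             (\<forall>x. 0 \<le> x \<longrightarrow> x < 1 \<longrightarrow> (\<lambda>n. c n * x^n) sums exp (WL L x))"
proof -
  have B: "\<forall>k. muL L k \<le> length L" using muL_le by blast
  have supp: "\<forall>k. muL L k \<noteq> 0 \<longrightarrow> 5 dvd k"
  proof (intro allI impI)
    fix k assume "muL L k \<noteq> 0"
    then obtain p where p: "p \<in> set L" "ind (fst p) (snd p) k \<noteq> 0"
      unfolding muL_def by (induction L) (auto split: if_splits)
    then have "fst p \<le> k" "snd p dvd (k - fst p)" by (auto simp: ind_def split: if_splits)
    moreover have "5 dvd fst p" "5 dvd snd p" using L p by auto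
    ultimately have "5 dvd (fst p + (k - fst p))" by (meson dvd_add dvd_trans)
    then show "5 dvd k" using \<open>fst p \<le> k\<close> by simp
  qed
  have m5: "1 \<le> muL L 5"
  proof -
    have "ind 5 150 5 \<in> set (map (\<lambda>p. ind (fst p) (snd p) 5) L)" using mem by force
    then have "ind 5 150 5 \<le> muL L 5" unfolding muL_def by (rule member_le_sum_list) auto
    then show ?thesis by (simp add: ind_def)
  qed
  obtain c where c: "\<forall>n. \<not> 5 dvd n \<longrightarrow> c n = 0" "\<forall>n. 5 dvd n \<longrightarrow> 0 < c n"
    "\<forall>x. 0 \<le> x \<longrightarrow> x < 1 \<longrightarrow> (\<lambda>n. c n * x^n) sums exp (Wm (muL L) x)"
    using machine[OF B supp _ m5] by auto
  have "Wm (muL L) x = WL L x" if "0 \<le> x" "x < 1" for x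
    using WL_sums[of L x] L that unfolding Wm_def by (auto simp: sums_iff)
  then show ?thesis using c by (intro exI[of _ c]) auto
qed


definition L0 :: "(nat \<times> nat) list" where "L0 = [(5, 150), (10, 150), (15, 150), (20, 150), (25, 150), (30, 150), (35, 150), (40, 150), (45, 150), (50, 150), (55, 150), (60, 150), (65, 150), (75, 150), (85, 150), (90, 150), (95, 150), (100, 150), (105, 150), (110, 150), (115, 150), (120, 150), (125, 150), (130, 150), (135, 150), (140, 150), (145, 150)]"
definition L1 :: "(nat \<times> nat) list" where "L1 = [(5, 150), (10, 150), (15, 150), (20, 150), (25, 150), (30, 150), (35, 150), (40, 150), (45, 150), (55, 150), (60, 150), (65, 150), (70, 150), (75, 150), (80, 150), (85, 150), (90, 150), (95, 150), (105, 150), (110, 150), (115, 150), (120, 150), (125, 150), (130, 150), (135, 150), (140, 150), (145, 150)]"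
definition L2 :: "(nat \<times> nat) list" where "L2 = [(5, 150), (10, 150), (15, 150), (25, 150), (30, 150), (35, 150), (40, 150), (45, 150), (50, 150), (55, 150), (60, 150), (65, 150), (70, 150), (75, 150), (80, 150), (85, 150), (90, 150), (95, 150), (100, 150), (105, 150), (110, 150), (115, 150), (120, 150), (125, 150), (135, 150), (140, 150), (145, 150)]"
definition L4 :: "(nat \<times> nat) list" where "L4 = [(5, 150), (15, 150), (20, 150), (25, 150), (30, 150), (35, 150), (45, 150), (55, 150), (65, 150), (70, 150), (75, 150), (80, 150), (85, 150), (95, 150), (105, 150), (115, 150), (120, 150), (125, 150), (130, 150), (135, 150), (145, 150), (20, 50), (30, 50)]"

lemma TP_exp: "TP N j q = exp (- (Wa N N q + Wa j N q + Wa (N - j) N q))"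
  unfolding TP_def Pinf_Wa by (simp add: exp_add[symmetric] exp_minus_inverse)

lemma sum_upt_list: "(\<Sum>r<n. f r) = sum_list (map f [0..<n])"
  by (simp add: sum_set_upt_conv_sum_list_nat[symmetric] atLeast0LessThan)

lemma R2: assumes "0 \<le> q" "q < 1"
  shows "Wa 5 5 q = sum_list (map (\<lambda>r. Wa (5 + 5*r) 150 q) [0..<30])"
  using Wa_refine[of 30 5 5 q] assms by (simp add: sum_upt_list)

lemma R2': assumes "0 \<le> q" "q < 1"
  shows "Wa 5 5 q = Wa 5 150 q + Wa 10 150 q + Wa 15 150 q + Wa 20 150 q + Wa 25 150 q + Wa 30 150 q + Wa 35 150 q + Wa 40 150 q + Wa 45 150 q + Wa 50 150 q + Wa 55 150 q + Wa 60 150 q + Wa 65 150 q + Wa 70 150 q + Wa 75 150 q + Wa 80 150 q + Wa 85 150 q + Wa 90 150 q + Wa 95 150 q + Wa 100 150 q + Wa 105 150 q + Wa 110 150 q + Wa 115 150 q + Wa 120 150 q + Wa 125 150 q + Wa 130 150 q + Wa 135 150 q + Wa 140 150 q + Wa 145 150 q + Wa 150 150 q"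
  using R2[OF assms] by (simp add: upt_rec)


lemma exp_ratio: "exp (- (A::real)) / exp (- B) = exp (B - A)"
  by (simp add: exp_diff exp_minus field_simps)

theorem F_identity:
  assumes q: "0 < q" "q < 1"
  shows "qpoch_inf (q^2) (q^2) / qpoch_inf (q^5) (q^5)
     = exp (WL L0 q) - q^2 * exp (WL L1 q) + q^10 * exp (WL L2 q) - q^4 * exp (WL L4 q)"
proof -
  have q0: "0 \<le> q" using q by simp
  have q2: "0 \<le> q^2" "q^2 < 1" using q by (auto simp: power_less_one_iff)
  have q5: "0 \<le> q^5" "q^5 < 1" using q by (auto simp: power_less_one_iff)
  have R1: "Wa 2 2 q = Wa 2 6 q + Wa 4 6 q + Wa 6 6 q"
    using Wa_refine[of 3 2 2 q] q by (simp add: sum_upt_list upt_rec numeral_2_eq_2[symmetric])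
  have R3: "Wa 10 50 q = Wa 10 150 q + Wa 60 150 q + Wa 110 150 q"
    using Wa_refine[of 3 10 50 q] q by (simp add: sum_upt_list upt_rec)
  have R4: "Wa 40 50 q = Wa 40 150 q + Wa 90 150 q + Wa 140 150 q"
    using Wa_refine[of 3 40 50 q] q by (simp add: sum_upt_list upt_rec)
  note R5 = R2'[OF q0 q(2)]
  have E2: "qpoch_inf (q^2) (q^2) = TP 6 2 q"
    using qpoch_Pinf[OF q2 q2] Pinf_Wa[of q 2 2] R1 by (simp add: TP_exp algebra_simps)
  define E5 where "E5 = exp (- Wa 5 5 q)"
  have E5': "qpoch_inf (q^5) (q^5) = E5"
    using qpoch_Pinf[OF q5 q5] Pinf_Wa[of q 5 5] by (simp add: E5_def)
  have E50: "E5 \<noteq> 0" by (simp add: E5_def)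
  have U0: "TP 50 20 q \<noteq> 0" by (simp add: TP_exp)
  have S: "TP 150 40 q - q^10 * TP 150 10 q = TP 50 10 q * TP 150 50 q / TP 50 20 q"
    using schroeter[OF q] U0 by (simp add: field_simps)
  have X0: "TP 150 70 q / E5 = exp (WL L0 q)"
  proof -
    have W: "WL L0 q = Wa 5 5 q - (Wa 150 150 q + Wa 70 150 q + Wa 80 150 q)"
      unfolding R5 by (simp add: WL_def L0_def)
    have T: "TP 150 70 q = exp (- (Wa 150 150 q + Wa 70 150 q + Wa 80 150 q))"
      unfolding TP_exp by simp
    show ?thesis unfolding T E5_def exp_ratio W ..
  qed
  have X1: "TP 150 100 q / E5 = exp (WL L1 q)"
  proof -
    have W: "WL L1 q = Wa 5 5 q - (Wa 150 150 q + Wa 100 150 q + Wa 50 150 q)"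
      unfolding R5 by (simp add: WL_def L1_def)
    have T: "TP 150 100 q = exp (- (Wa 150 150 q + Wa 100 150 q + Wa 50 150 q))"
      unfolding TP_exp by simp
    show ?thesis unfolding T E5_def exp_ratio W ..
  qed
  have X2: "TP 150 130 q / E5 = exp (WL L2 q)"
  proof -
    have W: "WL L2 q = Wa 5 5 q - (Wa 150 150 q + Wa 130 150 q + Wa 20 150 q)"
      unfolding R5 by (simp add: WL_def L2_def)
    have T: "TP 150 130 q = exp (- (Wa 150 150 q + Wa 130 150 q + Wa 20 150 q))"
      unfolding TP_exp by simp
    show ?thesis unfolding T E5_def exp_ratio W ..
  qed
  have X4: "TP 50 10 q * TP 150 50 q / TP 50 20 q / E5 = exp (WL L4 q)"
  proof -
    have W: "WL L4 q = Wa 5 5 q - ((Wa 50 50 q + Wa 10 50 q + Wa 40 50 q) + (Wa 150 150 q + Wa 50 150 q + Wa 100 150 q)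
           - (Wa 50 50 q + Wa 20 50 q + Wa 30 50 q))"
      unfolding R5 R3 R4 by (simp add: WL_def L4_def)
    have P: "TP 50 10 q * TP 150 50 q / TP 50 20 q
        = exp (- ((Wa 50 50 q + Wa 10 50 q + Wa 40 50 q) + (Wa 150 150 q + Wa 50 150 q + Wa 100 150 q)
           - (Wa 50 50 q + Wa 20 50 q + Wa 30 50 q)))"
      by (simp add: TP_exp exp_diff exp_add exp_minus field_simps)
    show ?thesis unfolding P E5_def exp_ratio W ..
  qed
  have "qpoch_inf (q^2) (q^2) / qpoch_inf (q^5) (q^5)
      = (TP 150 70 q - q^2 * TP 150 100 q + q^10 * TP 150 130 q
          - q^4 * (TP 50 10 q * TP 150 50 q / TP 50 20 q)) / E5"
    unfolding E2 E5' dissection[OF q] S ..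
  also have "\<dots> = TP 150 70 q / E5 - q^2 * (TP 150 100 q / E5) + q^10 * (TP 150 130 q / E5)
          - q^4 * (TP 50 10 q * TP 150 50 q / TP 50 20 q / E5)"
    by (simp add: diff_divide_distrib add_divide_distrib)
  also have "\<dots> = exp (WL L0 q) - q^2 * exp (WL L1 q) + q^10 * exp (WL L2 q) - q^4 * exp (WL L4 q)"
    unfolding X0 X1 X2 X4 ..
  finally show ?thesis .
qed


lemma sums_shift_pow:
  fixes c :: "nat \<Rightarrow> real"
  assumes "(\<lambda>n. c n * x^n) sums S"
  shows "(\<lambda>n. (if m \<le> n then c (n - m) else 0) * x^n) sums (x^m * S)"
proof -
  have "(\<lambda>i. x^m * (c i * x^i)) sums (x^m * S)" by (rule sums_mult[OF assms])
  then have "(\<lambda>i. (if m \<le> i + m then c (i + m - m) else 0) * x^(i+m)) sums (x^m * S)"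
    by (simp add: power_add algebra_simps)
  then show ?thesis
    using sums_zero_iff_shift[of m "\<lambda>n. (if m \<le> n then c (n - m) else 0) * x^n" "x^m * S"] by simp
qed

lemma powser_unique:
  fixes a b :: "nat \<Rightarrow> real"
  assumes A: "\<And>x. 0 < x \<Longrightarrow> x < 1 \<Longrightarrow> (\<lambda>n. a n * x^n) sums f x"
      and B: "\<And>x. 0 < x \<Longrightarrow> x < 1 \<Longrightarrow> (\<lambda>n. b n * x^n) sums f x"
  shows "a n = b n"
proof -
  define e where "e n = a n - b n" for n
  have S: "(\<lambda>n. e n * x^n) sums 0" if "0 < x" "x < 1" for x
    using sums_diff[OF A[OF that] B[OF that]] by (simp add: e_def algebra_simps)
  have step: "e n = 0" if IH: "\<forall>k<n. e k = 0" for n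
  proof -
    define g where "g x = (\<Sum>k. e (k+n) * x^k)" for x
    have Sg: "(\<lambda>k. e (k+n) * x^k) sums 0" if x: "0 < x" "x < 1" for x
    proof -
      have "(\<lambda>i. e (i + n) * x^(i+n)) sums 0"
        using sums_zero_iff_shift[of n "\<lambda>i. e i * x^i" 0] IH S[OF x] by simp
      then have "(\<lambda>i. (e (i + n) * x^(i+n)) / x^n) sums (0 / x^n)" by (rule sums_divide)
      moreover have "(\<lambda>i. (e (i + n) * x^(i+n)) / x^n) = (\<lambda>i. e (i+n) * x^i)"
        using x by (simp add: power_add fun_eq_iff)
      ultimately show ?thesis by simp
    qed
    have sh: "summable (\<lambda>k. e (k+n) * (1/2)^k)" using Sg[of "1/2"] by (simp add: sums_iff)
    have cont: "isCont g 0" unfolding g_def by (rule isCont_powser[OF sh]) simp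
    have g0: "g 0 = e n" unfolding g_def using powser_zero[of "\<lambda>k. e (k+n)"] by simp
    have l1: "(g \<longlongrightarrow> g 0) (at_right 0)"
      using cont unfolding isCont_def by (rule tendsto_within_subset) simp
    have ev0: "eventually (\<lambda>x. x \<in> {0<..<1}) (at_right (0::real))"
      by (rule eventually_at_right_real) simp
    have ev: "eventually (\<lambda>x. 0 = g x) (at_right (0::real))"
      using ev0
    proof eventually_elim
      case (elim x)
      then show ?case using Sg[of x] by (simp add: g_def sums_iff)
    qed
    have l2: "(g \<longlongrightarrow> 0) (at_right 0)"
      by (rule Lim_transform_eventually[OF tendsto_const ev])
    have "g 0 = 0" using tendsto_unique[OF _ l1 l2] by simp
    then show ?thesis using g0 by simp
  qed
  have "e n = 0"
    by (induction n rule: nat_less_induct) (use step in blast)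
  then show ?thesis by (simp add: e_def)
qed

lemma shifted_cases:
  fixes c :: "nat \<Rightarrow> real"
  assumes z: "\<forall>m. \<not> 5 dvd m \<longrightarrow> c m = 0" and p: "\<forall>m. 5 dvd m \<longrightarrow> 0 < c m"
  shows "k \<le> n \<and> 5 dvd (n - k) \<Longrightarrow> 0 < (if k \<le> n then c (n - k) else 0)"
    and "\<not> (k \<le> n \<and> 5 dvd (n - k)) \<Longrightarrow> (if k \<le> n then c (n - k) else 0) = 0"
    and "0 \<le> (if k \<le> n then c (n - k) else 0)"
proof -
  show "k \<le> n \<and> 5 dvd (n - k) \<Longrightarrow> 0 < (if k \<le> n then c (n - k) else 0)" using p by simp
  show "\<not> (k \<le> n \<and> 5 dvd (n - k)) \<Longrightarrow> (if k \<le> n then c (n - k) else 0) = 0" using z by auto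
  have "0 \<le> c m" for m using z p by (cases "5 dvd m") (auto simp: less_imp_le)
  then show "0 \<le> (if k \<le> n then c (n - k) else 0)" by simp
qed

theorem corollary1p2:
  fixes a :: "nat \<Rightarrow> real"
  assumes "\<And>q::real. \<bar>q\<bar> < 1 \<Longrightarrow>
     (\<lambda>n. a n * q ^ n) sums (qpoch_inf (q^2) (q^2) / qpoch_inf (q^5) (q^5))"
  shows "\<forall>n. (n mod 5 = 0 \<longrightarrow> a n > 0)
            \<and> (n mod 5 = 2 \<or> n mod 5 = 4 \<longrightarrow> a n < 0)
            \<and> (n mod 5 = 1 \<or> n mod 5 = 3 \<longrightarrow> a n = 0)"
proof -
  have ok0: "\<forall>p\<in>set L0. 0 < fst p \<and> 0 < snd p \<and> 5 dvd fst p \<and> 5 dvd snd p" "(5, 150) \<in> set L0"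
    by (simp_all add: L0_def)
  have ok1: "\<forall>p\<in>set L1. 0 < fst p \<and> 0 < snd p \<and> 5 dvd fst p \<and> 5 dvd snd p" "(5, 150) \<in> set L1"
    by (simp_all add: L1_def)
  have ok2: "\<forall>p\<in>set L2. 0 < fst p \<and> 0 < snd p \<and> 5 dvd fst p \<and> 5 dvd snd p" "(5, 150) \<in> set L2"
    by (simp_all add: L2_def)
  have ok4: "\<forall>p\<in>set L4. 0 < fst p \<and> 0 < snd p \<and> 5 dvd fst p \<and> 5 dvd snd p" "(5, 150) \<in> set L4"
    by (simp_all add: L4_def)
  obtain c0 where c0: "\<forall>n. \<not> 5 dvd n \<longrightarrow> c0 n = 0" "\<forall>n. 5 dvd n \<longrightarrow> 0 < c0 n"
      "\<forall>x. 0 \<le> x \<longrightarrow> x < 1 \<longrightarrow> (\<lambda>n. c0 n * x^n) sums exp (WL L0 x)"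
    using machineL[OF ok0] by blast
  obtain c1 where c1: "\<forall>n. \<not> 5 dvd n \<longrightarrow> c1 n = 0" "\<forall>n. 5 dvd n \<longrightarrow> 0 < c1 n"
      "\<forall>x. 0 \<le> x \<longrightarrow> x < 1 \<longrightarrow> (\<lambda>n. c1 n * x^n) sums exp (WL L1 x)"
    using machineL[OF ok1] by blast
  obtain c2 where c2: "\<forall>n. \<not> 5 dvd n \<longrightarrow> c2 n = 0" "\<forall>n. 5 dvd n \<longrightarrow> 0 < c2 n"
      "\<forall>x. 0 \<le> x \<longrightarrow> x < 1 \<longrightarrow> (\<lambda>n. c2 n * x^n) sums exp (WL L2 x)"
    using machineL[OF ok2] by blast
  obtain c4 where c4: "\<forall>n. \<not> 5 dvd n \<longrightarrow> c4 n = 0" "\<forall>n. 5 dvd n \<longrightarrow> 0 < c4 n"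
      "\<forall>x. 0 \<le> x \<longrightarrow> x < 1 \<longrightarrow> (\<lambda>n. c4 n * x^n) sums exp (WL L4 x)"
    using machineL[OF ok4] by blast
  define b where "b n = c0 n - (if 2 \<le> n then c1 (n-2) else 0) + (if 10 \<le> n then c2 (n-10) else 0)
                        - (if 4 \<le> n then c4 (n-4) else 0)" for n
  have bs: "(\<lambda>n. b n * x^n) sums (qpoch_inf (x^2) (x^2) / qpoch_inf (x^5) (x^5))"
    if x: "0 < x" "x < 1" for x
  proof -
    have s0: "(\<lambda>n. c0 n * x^n) sums exp (WL L0 x)" using c0(3) x by simp
    have s1: "(\<lambda>n. (if 2 \<le> n then c1 (n-2) else 0) * x^n) sums (x^2 * exp (WL L1 x))"
      using c1(3) x by (intro sums_shift_pow) simp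
    have s2: "(\<lambda>n. (if 10 \<le> n then c2 (n-10) else 0) * x^n) sums (x^10 * exp (WL L2 x))"
      using c2(3) x by (intro sums_shift_pow) simp
    have s4: "(\<lambda>n. (if 4 \<le> n then c4 (n-4) else 0) * x^n) sums (x^4 * exp (WL L4 x))"
      using c4(3) x by (intro sums_shift_pow) simp
    have "(\<lambda>n. c0 n * x^n - (if 2 \<le> n then c1 (n-2) else 0) * x^n + (if 10 \<le> n then c2 (n-10) else 0) * x^n
              - (if 4 \<le> n then c4 (n-4) else 0) * x^n)
          sums (exp (WL L0 x) - x^2 * exp (WL L1 x) + x^10 * exp (WL L2 x) - x^4 * exp (WL L4 x))"
      by (intro sums_add sums_diff s0 s1 s2 s4)
    then show ?thesis unfolding F_identity[OF x] by (simp add: b_def algebra_simps)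
  qed
  have ab: "a n = b n" for n
  proof (rule powser_unique[where f = "\<lambda>x. qpoch_inf (x^2) (x^2) / qpoch_inf (x^5) (x^5)"])
    show "(\<lambda>n. a n * x^n) sums (qpoch_inf (x^2) (x^2) / qpoch_inf (x^5) (x^5))" if "0 < x" "x < 1" for x
      using assms[of x] that by simp
    show "(\<lambda>n. b n * x^n) sums (qpoch_inf (x^2) (x^2) / qpoch_inf (x^5) (x^5))" if "0 < x" "x < 1" for x
      using bs that by simp
  qed
  note S1 = shifted_cases[OF c1(1,2)] and S2 = shifted_cases[OF c2(1,2)] and S4 = shifted_cases[OF c4(1,2)]
  show ?thesis
  proof (intro allI conjI impI)
    fix n :: nat
    assume n: "n mod 5 = 0"
    have "5 dvd n" using n by presburger
    then have "0 < c0 n" using c0(2) by simp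
    moreover have "(if 2 \<le> n then c1 (n-2) else 0) = 0" by (rule S1(2)) (use n in presburger)
    moreover have "(if 4 \<le> n then c4 (n-4) else 0) = 0" by (rule S4(2)) (use n in presburger)
    moreover have "0 \<le> (if 10 \<le> n then c2 (n-10) else 0)" by (rule S2(3))
    ultimately show "a n > 0" unfolding ab b_def by linarith
  next
    fix n :: nat
    assume n: "n mod 5 = 2 \<or> n mod 5 = 4"
    have "\<not> 5 dvd n" using n by presburger
    then have "c0 n = 0" using c0(1) by simp
    moreover have "(if 10 \<le> n then c2 (n-10) else 0) = 0" by (rule S2(2)) (use n in presburger)
    moreover have "0 \<le> (if 2 \<le> n then c1 (n-2) else 0)" by (rule S1(3))
    moreover have "0 \<le> (if 4 \<le> n then c4 (n-4) else 0)" by (rule S4(3))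
    moreover have "0 < (if 2 \<le> n then c1 (n-2) else 0) \<or> 0 < (if 4 \<le> n then c4 (n-4) else 0)"
    proof (cases "n mod 5 = 2")
      case True
      then have "2 \<le> n \<and> 5 dvd (n-2)" by presburger
      then show ?thesis using S1(1) by blast
    next
      case False
      then have "4 \<le> n \<and> 5 dvd (n-4)" using n by presburger
      then show ?thesis using S4(1) by blast
    qed
    ultimately show "a n < 0" unfolding ab b_def by linarith
  next
    fix n :: nat
    assume n: "n mod 5 = 1 \<or> n mod 5 = 3"
    have "\<not> 5 dvd n" using n by presburger
    then have "c0 n = 0" using c0(1) by simp
    moreover have "(if 2 \<le> n then c1 (n-2) else 0) = 0" by (rule S1(2)) (use n in presburger)
    moreover have "(if 4 \<le> n then c4 (n-4) else 0) = 0" by (rule S4(2)) (use n in presburger)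
    moreover have "(if 10 \<le> n then c2 (n-10) else 0) = 0" by (rule S2(2)) (use n in presburger)
    ultimately show "a n = 0" unfolding ab b_def by linarith
  qed
qed


end
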